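(* Let $\zeta$ be a primitive aperiodic binary substitution of constant length. Then for every $y\in X_\zeta$ and every $m,\ell\in\mathbb N$, \[ \lim_{h\to\infty}\frac{\mathrm{RR}_{\ell+1}(y^{(m)},\infty,2^{-h})}{\mathrm{RR}_\ell(y^{(m)},\infty,2^{-h})}=1 . \]
   Context: Alphabet $A=\{0,1\}$, $\Sigma=A^{\mathbb N_0}$ with metric $\rho(y,z)=2^{-\min\{i\ge0:\,y_i\ne z_i\}}$ ($y\ne z$), shift $\sigma$. A binary substitution of constant length $q\ge2$ is $\zeta:A\to A^*$ with $|\zeta(0)|=|\zeta(1)|=q$, extended to words by concatenation; $\mathcal L_\zeta$ = set of subwords of words $\zeta^k(a)$; $X_\zeta=\{y\in\Sigma:y_0\dots y_{n-1}\in\mathcal L_\zeta\ \forall n\}$. $\zeta$ is primitive if for some $k$ every letter occurs in $\zeta^k(a)$ for all $a$; aperiodic if $X_\zeta$ contains a non-$\sigma$-periodic sequence. For a sequence $z$ (finite alphabet, analogous metric and shift), $\varepsilon>0$, $n\ge2$: recurrence plot $R(z,n,\varepsilon)$ is the $n\times n$ matrix ($0\le i,j<n$) with entry $1$ iff $\rho(\sigma^iz,\sigma^jz)\le\varepsilon$. A line of length $\ell$ is $(i,j,\ell)$ with $0\le i,j\le n-\ell$, $i\ne j$, entries $(i+k,j+k)=1$ for $0\le k<\ell$, entry $(i-1,j-1)=0$ if $\min\{i,j\}>0$, entry $(i+\ell,j+\ell)=0$ if $\max\{i,j\}<n-\ell$. $N_\ell$ = number of lines of length exactly $\ell$, $\lambda_\ell=N_\ell/(n^2-n)$,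 recurrence rate $\mathrm{RR}_\ell=\sum_{l\ge\ell}l\lambda_l$; $\mathrm{RR}_\ell(z,\infty,\varepsilon)=\lim_{n\to\infty}\mathrm{RR}_\ell(z,n,\varepsilon)$ (which exists and is positive in the present setting). Embedding: $y^{(m)}$ is the sequence over $A^m$ whose $j$-th letter is $y_j\dots y_{j+m-1}$. *)

theory Defs
  imports Complex_Main
begin

text \<open>Alphabet A = {0,1} is rendered as bool (False = 0, True = 1).
  One-sided sequences are functions nat => 'a.\<close>

definition shift :: "nat \<Rightarrow> (nat \<Rightarrow> 'a) \<Rightarrow> (nat \<Rightarrow> 'a)" where
  "shift i z = (\<lambda>k. z (k + i))"

definition rho :: "(nat \<Rightarrow> 'a) \<Rightarrow> (nat \<Rightarrow> 'a) \<Rightarrow> real" where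
  "rho y z = (if y = z then 0 else (1/2) ^ (LEAST i. y i \<noteq> z i))"

definition subst_word :: "(bool \<Rightarrow> bool list) \<Rightarrow> bool list \<Rightarrow> bool list" where
  "subst_word \<zeta> w = concat (map \<zeta> w)"

definition const_length_subst :: "(bool \<Rightarrow> bool list) \<Rightarrow> nat \<Rightarrow> bool" where
  "const_length_subst \<zeta> q \<longleftrightarrow> q \<ge> 2 \<and> (\<forall>a. length (\<zeta> a) = q)"

definition subst_language :: "(bool \<Rightarrow> bool list) \<Rightarrow> bool list set" where
  "subst_language \<zeta> = {w. \<exists>k a u v. (subst_word \<zeta> ^^ k) [a] = u @ w @ v}"

definition subshift :: "(bool \<Rightarrow> bool list) \<Rightarrow> (nat \<Rightarrow> bool) set" where
  "subshift \<zeta> = {y. \<forall>n. map y [0..<n] \<in> subst_language \<zeta>}"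

definition primitive_subst :: "(bool \<Rightarrow> bool list) \<Rightarrow> bool" where
  "primitive_subst \<zeta> \<longleftrightarrow> (\<exists>k. \<forall>a b. b \<in> set ((subst_word \<zeta> ^^ k) [a]))"

definition shift_periodic :: "(nat \<Rightarrow> 'a) \<Rightarrow> bool" where
  "shift_periodic y \<longleftrightarrow> (\<exists>p>0. shift p y = y)"

definition aperiodic_subst :: "(bool \<Rightarrow> bool list) \<Rightarrow> bool" where
  "aperiodic_subst \<zeta> \<longleftrightarrow> (\<exists>y \<in> subshift \<zeta>. \<not> shift_periodic y)"

definition rp_entry :: "(nat \<Rightarrow> 'a) \<Rightarrow> real \<Rightarrow> nat \<Rightarrow> nat \<Rightarrow> bool" where
  "rp_entry z \<epsilon> i j \<longleftrightarrow> rho (shift i z) (shift j z) \<le> \<epsilon>"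

definition is_line :: "(nat \<Rightarrow> 'a) \<Rightarrow> nat \<Rightarrow> real \<Rightarrow> nat \<Rightarrow> nat \<Rightarrow> nat \<Rightarrow> bool" where
  "is_line z n \<epsilon> i j l \<longleftrightarrow>
     l \<le> n \<and> i \<le> n - l \<and> j \<le> n - l \<and> i \<noteq> j \<and>
     (\<forall>k<l. rp_entry z \<epsilon> (i + k) (j + k)) \<and>
     (min i j > 0 \<longrightarrow> \<not> rp_entry z \<epsilon> (i - 1) (j - 1)) \<and>
     (max i j < n - l \<longrightarrow> \<not> rp_entry z \<epsilon> (i + l) (j + l))"

definition num_lines :: "(nat \<Rightarrow> 'a) \<Rightarrow> nat \<Rightarrow> real \<Rightarrow> nat \<Rightarrow> nat" where
  "num_lines z n \<epsilon> l = card {(i, j). is_line z n \<epsilon> i j l}"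

definition line_freq :: "(nat \<Rightarrow> 'a) \<Rightarrow> nat \<Rightarrow> real \<Rightarrow> nat \<Rightarrow> real" where
  "line_freq z n \<epsilon> l = real (num_lines z n \<epsilon> l) / (real n ^ 2 - real n)"

text \<open>RR_l(z,n,eps) = sum over l' >= l of l' * lambda_l'; lines have length at most n.\<close>
definition RR :: "nat \<Rightarrow> (nat \<Rightarrow> 'a) \<Rightarrow> nat \<Rightarrow> real \<Rightarrow> real" where
  "RR l z n \<epsilon> = (\<Sum>l'\<in>{l..n}. real l' * line_freq z n \<epsilon> l')"

definition RR_inf :: "nat \<Rightarrow> (nat \<Rightarrow> 'a) \<Rightarrow> real \<Rightarrow> real" where
  "RR_inf l z \<epsilon> = lim (\<lambda>n. RR l z n \<epsilon>)"

definition delay_embed :: "nat \<Rightarrow> (nat \<Rightarrow> 'a) \<Rightarrow> (nat \<Rightarrow> 'a list)" where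
  "delay_embed m y = (\<lambda>j. map y [j..<j + m])"

end

theory Submission
  imports Defs "HOL-Real_Asymp.Real_Asymp"
begin


definition win :: "(nat \<Rightarrow> 'a) \<Rightarrow> nat \<Rightarrow> real \<Rightarrow> nat \<Rightarrow> (nat \<times> nat) set" where
  "win z n \<epsilon> l = {(i,j). i + l \<le> n \<and> j + l \<le> n \<and> i \<noteq> j \<and> (\<forall>k<l. rp_entry z \<epsilon> (i+k) (j+k))}"

lemma win_finite: "finite (win z n \<epsilon> l)"
  by (rule finite_subset[of _ "{..n}\<times>{..n}"]) (auto simp: win_def)

lemma win_big: "l > n \<Longrightarrow> win z n \<epsilon> l = {}"
  by (auto simp: win_def)

lemma lines_eq: "{(i,j). is_line z n \<epsilon> i j l} =
   win z n \<epsilon> l - (win z n \<epsilon> (Suc l) \<union> (\<lambda>(i,j). (Suc i, Suc j)) ` win z n \<epsilon> (Suc l))"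
proof (intro set_eqI iffI)
  fix p assume "p \<in> {(i,j). is_line z n \<epsilon> i j l}"
  then obtain i j where p: "p = (i,j)" and L: "is_line z n \<epsilon> i j l" by auto
  have w: "(i,j) \<in> win z n \<epsilon> l" using L by (auto simp: is_line_def win_def)
  have n1: "(i,j) \<notin> win z n \<epsilon> (Suc l)"
  proof
    assume "(i,j) \<in> win z n \<epsilon> (Suc l)"
    hence "i + l < n" "j + l < n" "rp_entry z \<epsilon> (i+l) (j+l)" by (auto simp: win_def)
    thus False using L by (auto simp: is_line_def)
  qed
  have n2: "(i,j) \<notin> (\<lambda>(i,j). (Suc i, Suc j)) ` win z n \<epsilon> (Suc l)"
  proof
    assume "(i,j) \<in> (\<lambda>(i,j). (Suc i, Suc j)) ` win z n \<epsilon> (Suc l)"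
    then obtain a b where "i = Suc a" "j = Suc b" "(a,b) \<in> win z n \<epsilon> (Suc l)" by auto
    hence "min i j > 0" "rp_entry z \<epsilon> (i-1) (j-1)" by (auto simp: win_def)
    thus False using L by (auto simp: is_line_def)
  qed
  show "p \<in> win z n \<epsilon> l - (win z n \<epsilon> (Suc l) \<union> (\<lambda>(i,j). (Suc i, Suc j)) ` win z n \<epsilon> (Suc l))"
    using w n1 n2 p by auto
next
  fix p assume A: "p \<in> win z n \<epsilon> l - (win z n \<epsilon> (Suc l) \<union> (\<lambda>(i,j). (Suc i, Suc j)) ` win z n \<epsilon> (Suc l))"
  then obtain i j where p: "p = (i,j)" by (cases p)
  have w: "(i,j) \<in> win z n \<epsilon> l" using A p by auto
  have n1: "(i,j) \<notin> win z n \<epsilon> (Suc l)" using A p by auto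
  have n2: "(i,j) \<notin> (\<lambda>(i,j). (Suc i, Suc j)) ` win z n \<epsilon> (Suc l)" using A p by auto
  have c1: "\<not> rp_entry z \<epsilon> (i - 1) (j - 1)" if "min i j > 0"
  proof
    assume e: "rp_entry z \<epsilon> (i - 1) (j - 1)"
    have "(i-1, j-1) \<in> win z n \<epsilon> (Suc l)"
      using w e that unfolding win_def
      by (auto simp: less_Suc_eq_0_disj)
    hence "(Suc (i-1), Suc (j-1)) \<in> (\<lambda>(i,j). (Suc i, Suc j)) ` win z n \<epsilon> (Suc l)" by force
    thus False using n2 that by simp
  qed
  have c2: "\<not> rp_entry z \<epsilon> (i + l) (j + l)" if "max i j < n - l"
  proof
    assume e: "rp_entry z \<epsilon> (i + l) (j + l)"
    have "(i, j) \<in> win z n \<epsilon> (Suc l)"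
      using w e that unfolding win_def by (auto simp: less_Suc_eq)
    thus False using n1 by simp
  qed
  show "p \<in> {(i,j). is_line z n \<epsilon> i j l}"
    using w c1 c2 p unfolding is_line_def win_def by auto
qed

lemma card_win_shift: "card ((\<lambda>(i,j). (Suc i, Suc j)) ` win z n \<epsilon> l) = card (win z n \<epsilon> l)"
  by (rule card_image) (auto simp: inj_on_def)

lemma win_inter: "win z n \<epsilon> (Suc l) \<inter> (\<lambda>(i,j). (Suc i, Suc j)) ` win z n \<epsilon> (Suc l)
     = (\<lambda>(i,j). (Suc i, Suc j)) ` win z n \<epsilon> (Suc (Suc l))"
proof (intro set_eqI iffI)
  fix p assume "p \<in> win z n \<epsilon> (Suc l) \<inter> (\<lambda>(i,j). (Suc i, Suc j)) ` win z n \<epsilon> (Suc l)"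
  then obtain a b where p: "p = (Suc a, Suc b)" and w1: "(Suc a, Suc b) \<in> win z n \<epsilon> (Suc l)"
    and w2: "(a,b) \<in> win z n \<epsilon> (Suc l)" by auto
  have "(a,b) \<in> win z n \<epsilon> (Suc (Suc l))"
    using w1 w2 unfolding win_def
    by (auto simp: less_Suc_eq)
  thus "p \<in> (\<lambda>(i,j). (Suc i, Suc j)) ` win z n \<epsilon> (Suc (Suc l))" using p by force
next
  fix p assume "p \<in> (\<lambda>(i,j). (Suc i, Suc j)) ` win z n \<epsilon> (Suc (Suc l))"
  then obtain a b where p: "p = (Suc a, Suc b)" and w: "(a,b) \<in> win z n \<epsilon> (Suc (Suc l))" by auto
  have "(Suc a, Suc b) \<in> win z n \<epsilon> (Suc l)" "(a, b) \<in> win z n \<epsilon> (Suc l)"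
    using w unfolding win_def by auto
  thus "p \<in> win z n \<epsilon> (Suc l) \<inter> (\<lambda>(i,j). (Suc i, Suc j)) ` win z n \<epsilon> (Suc l)" using p by force
qed

lemma win_sub1: "win z n \<epsilon> (Suc l) \<subseteq> win z n \<epsilon> l"
  by (auto simp: win_def)
lemma win_sub2: "(\<lambda>(i,j). (Suc i, Suc j)) ` win z n \<epsilon> (Suc l) \<subseteq> win z n \<epsilon> l"
  unfolding win_def by auto

lemma num_lines_win: "real (num_lines z n \<epsilon> l) =
   real (card (win z n \<epsilon> l)) - 2 * real (card (win z n \<epsilon> (Suc l))) + real (card (win z n \<epsilon> (Suc (Suc l))))"
proof -
  let ?W = "win z n \<epsilon> l" and ?B = "win z n \<epsilon> (Suc l)" and ?C = "(\<lambda>(i,j). (Suc i, Suc j)) ` win z n \<epsilon> (Suc l)"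
  have fB: "finite ?B" "finite ?C" "finite ?W" using win_finite by (simp_all add: win_finite)
  have sub: "?B \<union> ?C \<subseteq> ?W" using win_sub1[of z n \<epsilon> l] win_sub2[of z n \<epsilon> l] by (rule Un_least)
  have "card (?W - (?B \<union> ?C)) = card ?W - card (?B \<union> ?C)"
    using sub fB by (intro card_Diff_subset) simp_all
  moreover have "card (?B \<union> ?C) \<le> card ?W" using sub fB by (intro card_mono) simp_all
  moreover have "card (?B \<union> ?C) + card (?B \<inter> ?C) = card ?B + card ?C"
    using card_Un_Int[OF fB(1) fB(2)] by simp
  ultimately have e1: "real (card (?W - (?B \<union> ?C))) = real (card ?W) - real (card (?B \<union> ?C))"
    and e2: "real (card (?B \<union> ?C)) + real (card (?B \<inter> ?C)) = real (card ?B) + real (card ?C)"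
    by (simp_all add: of_nat_diff)
  have "real (card (?W - (?B \<union> ?C))) = real (card ?W) - real (card ?B) - real (card ?C) + real (card (?B \<inter> ?C))"
    using e1 e2 by linarith
  thus ?thesis unfolding num_lines_def lines_eq win_inter card_win_shift by simp
qed

lemma telescope:
  fixes W :: "nat \<Rightarrow> real"
  shows "(\<Sum>l'\<in>{l..<l+d}. real l' * (W l' - 2 * W (Suc l') + W (Suc (Suc l')))) =
     real l * W l - (real l - 1) * W (Suc l) - real (l+d) * W (l+d) + (real (l+d) - 1) * W (Suc (l+d))"
proof (induction d)
  case 0 then show ?case by simp
next
  case (Suc d)
  have "{l..<l + Suc d} = insert (l+d) {l..<l+d}" by auto
  hence "(\<Sum>l'\<in>{l..<l+Suc d}. real l' * (W l' - 2 * W (Suc l') + W (Suc (Suc l')))) =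
    real (l+d) * (W (l+d) - 2 * W (Suc (l+d)) + W (Suc (Suc (l+d)))) + (\<Sum>l'\<in>{l..<l+d}. real l' * (W l' - 2 * W (Suc l') + W (Suc (Suc l'))))"
    by simp
  also have "\<dots> = real l * W l - (real l - 1) * W (Suc l) - real (l+Suc d) * W (l+Suc d) + (real (l+Suc d) - 1) * W (Suc (l+Suc d))"
    using Suc by (simp add: algebra_simps)
  finally show ?case .
qed

lemma RR_win:
  assumes "l \<ge> 1"
  shows "RR l z n \<epsilon> = (real l * real (card (win z n \<epsilon> l)) - (real l - 1) * real (card (win z n \<epsilon> (Suc l)))) / (real n ^ 2 - real n)"
proof -
  define W where "W = (\<lambda>k. real (card (win z n \<epsilon> k)))"
  have "RR l z n \<epsilon> = (\<Sum>l'\<in>{l..n}. real l' * (W l' - 2 * W (Suc l') + W (Suc (Suc l')))) / (real n ^ 2 - real n)"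
    unfolding RR_def line_freq_def W_def num_lines_win by (simp add: sum_divide_distrib)
  also have "(\<Sum>l'\<in>{l..n}. real l' * (W l' - 2 * W (Suc l') + W (Suc (Suc l')))) = real l * W l - (real l - 1) * W (Suc l)"
  proof (cases "l \<le> n")
    case True
    have e: "{l..n} = {l..<l + (Suc n - l)}" using True by auto
    have "W (l + (Suc n - l)) = 0" "W (Suc (l + (Suc n - l))) = 0"
      using True unfolding W_def by (auto simp: win_big)
    then show ?thesis unfolding e telescope by simp
  next
    case False
    then have "win z n \<epsilon> (Suc l) = {}" "win z n \<epsilon> l = {}" using win_big[of n "Suc l" z \<epsilon>] win_big[of n l z \<epsilon>] by auto
    then show ?thesis unfolding W_def using False by (simp add: atLeastatMost_empty)
  qed
  finally show ?thesis unfolding W_def by simp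
qed




definition agree :: "(nat \<Rightarrow> 'a) \<Rightarrow> nat \<Rightarrow> nat \<Rightarrow> nat \<Rightarrow> bool" where
  "agree y L i j \<longleftrightarrow> (\<forall>s<L. y (i+s) = y (j+s))"

definition P :: "(nat \<Rightarrow> 'a) \<Rightarrow> nat \<Rightarrow> nat \<Rightarrow> nat" where
  "P y L N = card {(i,j). i < N \<and> j < N \<and> agree y L i j}"

lemma rp_half: "rp_entry z ((1/2)^h) a b \<longleftrightarrow> (\<forall>t<h. z (a+t) = z (b+t))"
proof (cases "shift a z = shift b z")
  case True
  then have "\<forall>t. z (a+t) = z (b+t)" unfolding shift_def by (metis add.commute)
  then show ?thesis using True by (simp add: rp_entry_def rho_def)
next
  case False
  then obtain t0 where t0: "z (t0 + a) \<noteq> z (t0 + b)" unfolding shift_def by (meson ext)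
  define i0 where "i0 = (LEAST i. shift a z i \<noteq> shift b z i)"
  have i0: "z (i0 + a) \<noteq> z (i0 + b)" unfolding i0_def shift_def
    by (rule LeastI[of "\<lambda>i. z (i + a) \<noteq> z (i + b)"]) (rule t0)
  have i0m: "\<And>t. t < i0 \<Longrightarrow> z (t + a) = z (t + b)"
    unfolding i0_def shift_def using not_less_Least by blast
  have "rp_entry z ((1/2)^h) a b \<longleftrightarrow> ((1/2::real)^i0 \<le> (1/2)^h)"
    using False by (simp add: rp_entry_def rho_def i0_def)
  also have "\<dots> \<longleftrightarrow> h \<le> i0" by (simp add: power_decreasing_iff)
  also have "\<dots> \<longleftrightarrow> (\<forall>t<h. z (a+t) = z (b+t))"
  proof
    assume "h \<le> i0" then show "\<forall>t<h. z (a+t) = z (b+t)" using i0m by (simp add: add.commute)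
  next
    assume "\<forall>t<h. z (a+t) = z (b+t)"
    then show "h \<le> i0" using i0 by (metis add.commute not_less)
  qed
  finally show ?thesis .
qed

lemma delay_agree:
  assumes "h \<ge> 1" "m \<ge> 1"
  shows "(\<forall>t<h. delay_embed m y (a+t) = delay_embed m y (b+t)) \<longleftrightarrow> agree y (h+m-1) a b"
proof
  assume A: "\<forall>t<h. delay_embed m y (a+t) = delay_embed m y (b+t)"
  show "agree y (h+m-1) a b" unfolding agree_def
  proof (intro allI impI)
    fix s assume s: "s < h+m-1"
    define t where "t = min s (h-1)"
    define u where "u = s - t"
    have t: "t < h" "u < m" "s = t + u" using s assms unfolding t_def u_def by auto
    have "map y [a+t..<a+t+m] = map y [b+t..<b+t+m]" using A t unfolding delay_embed_def by auto
    hence "map y [a+t..<a+t+m] ! u = map y [b+t..<b+t+m] ! u" by simp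
    thus "y (a+s) = y (b+s)" using t by (simp add: add.assoc)
  qed
next
  assume A: "agree y (h+m-1) a b"
  show "\<forall>t<h. delay_embed m y (a+t) = delay_embed m y (b+t)"
  proof (intro allI impI)
    fix t assume t: "t < h"
    have "map y [a+t..<a+t+m] = map y [b+t..<b+t+m]"
    proof (rule nth_equalityI)
      fix u assume "u < length (map y [a+t..<a+t+m])"
      hence u: "u < m" by simp
      have "y (a + (t+u)) = y (b + (t+u))" using A t u unfolding agree_def by auto
      thus "map y [a+t..<a+t+m] ! u = map y [b+t..<b+t+m] ! u" using u by (simp add: add.assoc)
    qed simp
    thus "delay_embed m y (a+t) = delay_embed m y (b+t)" unfolding delay_embed_def by simp
  qed
qed

lemma agree_shift_all:
  assumes "l \<ge> 1" "L \<ge> 1"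
  shows "(\<forall>k<l. agree y L (i+k) (j+k)) \<longleftrightarrow> agree y (L+l-1) i j"
  using assms unfolding agree_def
proof (intro iffI allI impI)
  fix s assume A: "\<forall>k<l. \<forall>s<L. y (i + k + s) = y (j + k + s)" and s: "s < L + l - 1"
  show "y (i+s) = y (j+s)"
  proof (cases "s < L")
    case True then show ?thesis using A assms by (metis add.right_neutral less_one order_less_le_trans)
  next
    case False
    define k where "k = s - (L - 1)"
    have "k < l" "L - 1 < L" "s = k + (L-1)" using False s assms(2) unfolding k_def by auto
    then show ?thesis using A by (metis add.assoc)
  qed
next
  fix k s assume A: "\<forall>s<L + l - 1. y (i + s) = y (j + s)" and k: "k < l" and s: "s < L"
  show "y (i + k + s) = y (j + k + s)" using A[rule_format, of "k+s"] k s by (simp add: add.assoc)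
qed

lemma win_agree:
  assumes "l \<ge> 1" "h \<ge> 1" "m \<ge> 1"
  shows "win (delay_embed m y) n ((1/2)^h) l =
    {(i,j). i < Suc n - l \<and> j < Suc n - l \<and> agree y (h+m+l-2) i j} - {(i,i) | i. i < Suc n - l}"
proof -
  have e: "\<And>i j. (\<forall>k<l. rp_entry (delay_embed m y) ((1/2)^h) (i+k) (j+k)) \<longleftrightarrow> agree y (h+m+l-2) i j"
  proof -
    fix i j
    have "(\<forall>k<l. rp_entry (delay_embed m y) ((1/2)^h) (i+k) (j+k)) \<longleftrightarrow> (\<forall>k<l. agree y (h+m-1) (i+k) (j+k))"
      by (simp add: rp_half delay_agree[OF assms(2,3)])
    also have "\<dots> \<longleftrightarrow> agree y (h+m-1+l-1) i j" by (rule agree_shift_all) (use assms in auto)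
    also have "h+m-1+l-1 = h+m+l-2" using assms by simp
    finally show "?thesis i j" .
  qed
  show ?thesis unfolding win_def e by auto
qed

lemma card_win_agree:
  assumes "l \<ge> 1" "h \<ge> 1" "m \<ge> 1"
  shows "real (card (win (delay_embed m y) n ((1/2)^h) l)) = real (P y (h+m+l-2) (Suc n - l)) - real (Suc n - l)"
proof -
  let ?N = "Suc n - l"
  let ?S = "{(i,j). i < ?N \<and> j < ?N \<and> agree y (h+m+l-2) i j}"
  let ?D = "{(i,i) | i. i < ?N}"
  have sub: "?D \<subseteq> ?S" by (auto simp: agree_def)
  have fS: "finite ?S" by (rule finite_subset[of _ "{..<?N} \<times> {..<?N}"]) auto
  have cD: "card ?D = ?N"
  proof -
    have "?D = (\<lambda>i. (i,i)) ` {..<?N}" by auto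
    moreover have "card ((\<lambda>i. (i,i)) ` {..<?N}) = ?N" by (subst card_image) (auto simp: inj_on_def)
    ultimately show ?thesis by simp
  qed
  have "card (?S - ?D) = card ?S - card ?D" using card_Diff_subset[OF finite_subset[OF sub fS] sub] .
  moreover have "card ?D \<le> card ?S" using sub fS by (simp add: card_mono)
  ultimately show ?thesis unfolding win_agree[OF assms] P_def cD by (simp add: of_nat_diff)
qed




definition occ :: "'a list \<Rightarrow> 'a list \<Rightarrow> nat" where
  "occ w x = card {i. i + length w \<le> length x \<and> take (length w) (drop i x) = w}"

lemma occ_finite: "finite {i. i + length w \<le> length x \<and> take (length w) (drop i x) = w}"
  by (rule finite_subset[of _ "{..length x}"]) auto

lemma occ_le: "w \<noteq> [] \<Longrightarrow> occ w x \<le> length x"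
proof -
  assume "w \<noteq> []"
  hence "length w > 0" by simp
  hence "{i. i + length w \<le> length x \<and> take (length w) (drop i x) = w} \<subseteq> {..<length x}"
    by (intro subsetI) (simp only: mem_Collect_eq lessThan_iff, linarith)
  thus ?thesis unfolding occ_def by (metis card_lessThan card_mono finite_lessThan)
qed

lemma occ_take: "occ w (take n x) \<le> occ w x"
  unfolding occ_def
  by (rule card_mono[OF occ_finite]) (auto simp: take_drop min_def)

lemma occ_drop: assumes "w \<noteq> []" shows "occ w (drop n x) \<le> occ w x"
proof -
  have lw: "length w > 0" using assms by simp
  have "{i. i + length w \<le> length (drop n x) \<and> take (length w) (drop i (drop n x)) = w}
     = (\<lambda>i. i - n) ` {i. n \<le> i \<and> i + length w \<le> length x \<and> take (length w) (drop i x) = w}"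
  proof (intro set_eqI iffI)
    fix i assume "i \<in> {i. i + length w \<le> length (drop n x) \<and> take (length w) (drop i (drop n x)) = w}"
    thus "i \<in> (\<lambda>i. i - n) ` {i. n \<le> i \<and> i + length w \<le> length x \<and> take (length w) (drop i x) = w}"
    proof (intro image_eqI[of _ _ "i+n"])
      assume A: "i \<in> {i. i + length w \<le> length (drop n x) \<and> take (length w) (drop i (drop n x)) = w}"
      hence "i + length w \<le> length x - n" by simp
      hence "n \<le> i + n" "i + n + length w \<le> length x" using lw by linarith+
      thus "i + n \<in> {i. n \<le> i \<and> i + length w \<le> length x \<and> take (length w) (drop i x) = w}"
        using A by (simp add: add.commute)
    qed simp
  qed (auto)
  also have "card \<dots> \<le> card {i. n \<le> i \<and> i + length w \<le> length x \<and> take (length w) (drop i x) = w}"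
    by (rule card_image_le) (rule finite_subset[OF _ occ_finite[of w x]], auto)
  also have "\<dots> \<le> occ w x" unfolding occ_def by (rule card_mono[OF occ_finite]) auto
  finally show ?thesis unfolding occ_def .
qed

lemma occ_append_ge: assumes "w \<noteq> []" shows "occ w u + occ w v \<le> occ w (u @ v)"
proof -
  have lw: "length w > 0" using assms by simp
  let ?S = "\<lambda>x. {i. i + length w \<le> length x \<and> take (length w) (drop i x) = w}"
  have d: "?S u \<inter> (\<lambda>i. i + length u) ` ?S v = {}" using lw by auto
  have "?S u \<union> (\<lambda>i. i + length u) ` ?S v \<subseteq> ?S (u @ v)" by auto
  hence "card (?S u \<union> (\<lambda>i. i + length u) ` ?S v) \<le> occ w (u@v)"
    unfolding occ_def by (rule card_mono[OF occ_finite])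
  moreover have "card (?S u \<union> (\<lambda>i. i + length u) ` ?S v) = occ w u + occ w v"
    unfolding occ_def
    by (subst card_Un_disjoint) (auto simp: occ_finite d card_image inj_on_def)
  ultimately show ?thesis by simp
qed

lemma occ_append_le: "occ w (u @ v) \<le> occ w u + occ w v + length w"
proof -
  let ?S = "\<lambda>x. {i. i + length w \<le> length x \<and> take (length w) (drop i x) = w}"
  have "?S (u@v) \<subseteq> ?S u \<union> (\<lambda>i. i + length u) ` ?S v \<union> {length u - length w..<length u}"
  proof
    fix i assume i: "i \<in> ?S (u@v)"
    show "i \<in> ?S u \<union> (\<lambda>i. i + length u) ` ?S v \<union> {length u - length w..<length u}"
    proof (cases "i + length w \<le> length u")
      case True then show ?thesis using i by auto
    next
      case False
      show ?thesis
      proof (cases "i < length u")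
        case True
        have "length u - length w \<le> i" using False by arith
        then show ?thesis using True by simp
      next
        case F2: False
        hence "i - length u \<in> ?S v" using i by auto
        moreover have "i = (i - length u) + length u" using F2 by simp
        ultimately show ?thesis by blast
      qed
    qed
  qed
  hence "occ w (u@v) \<le> card (?S u \<union> (\<lambda>i. i + length u) ` ?S v \<union> {length u - length w..<length u})"
    unfolding occ_def by (intro card_mono) (auto simp: occ_finite)
  also have "\<dots> \<le> card (?S u) + card ((\<lambda>i. i + length u) ` ?S v) + card {length u - length w..<length u}"
    by (meson card_Un_le add_le_mono order_trans order_refl)
  also have "\<dots> \<le> occ w u + occ w v + length w"
    unfolding occ_def by (intro add_mono card_image_le) (auto simp: occ_finite)
  finally show ?thesis .
qed

lemma occ_concat:
  assumes "w \<noteq> []" shows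
  "sum_list (map (occ w) bs) \<le> occ w (concat bs)"
  "occ w (concat bs) \<le> sum_list (map (occ w) bs) + length bs * length w"
proof -
  show "sum_list (map (occ w) bs) \<le> occ w (concat bs)"
  proof (induction bs)
    case Nil then show ?case by simp
  next
    case (Cons b bs) then show ?case using occ_append_ge[OF assms, of b "concat bs"] by simp
  qed
  show "occ w (concat bs) \<le> sum_list (map (occ w) bs) + length bs * length w"
  proof (induction bs)
    case Nil then show ?case using occ_le[OF assms, of "[]"] by simp
  next
    case (Cons b bs) then show ?case using occ_append_le[of w b "concat bs"] by simp
  qed
qed

lemma take_concat_blocks:
  assumes "\<forall>b\<in>set bs. length b = B"
  shows "take (j*B) (concat bs) = concat (take j bs)"
  using assms
proof (induction bs arbitrary: j)
  case Nil then show ?case by simp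
next
  case (Cons b bs)
  show ?case
  proof (cases j)
    case 0 then show ?thesis by simp
  next
    case (Suc j')
    then show ?thesis using Cons by (simp add: take_append)
  qed
qed

lemma drop_concat_blocks:
  assumes "\<forall>b\<in>set bs. length b = B"
  shows "drop (j*B) (concat bs) = concat (drop j bs)"
  using assms
proof (induction bs arbitrary: j)
  case Nil then show ?case by simp
next
  case (Cons b bs)
  show ?case
  proof (cases j)
    case 0 then show ?thesis by simp
  next
    case (Suc j')
    then show ?thesis using Cons by (simp add: drop_append)
  qed
qed

lemma length_concat_blocks:
  assumes "\<forall>b\<in>set bs. length b = B"
  shows "length (concat bs) = length bs * B"
  using assms by (induction bs) auto




lemma contract_to_zero:
  fixes x e :: "nat \<Rightarrow> real"
  assumes x0: "\<And>k. x k \<ge> 0" and rec: "\<And>k. x (Suc k) \<le> \<theta> * x k + e k"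
    and e: "e \<longlonglongrightarrow> 0" and th: "0 \<le> \<theta>" "\<theta> < 1"
  shows "x \<longlonglongrightarrow> 0"
proof (rule LIMSEQ_I)
  fix r :: real assume r: "r > 0"
  obtain K where K: "\<And>k. k \<ge> K \<Longrightarrow> norm (e k) < (1-\<theta>) * r / 2"
    using LIMSEQ_D[OF e, of "(1-\<theta>) * r / 2"] r th by auto
  have ind: "x (K + j) \<le> \<theta>^j * x K + r/2" for j
  proof (induction j)
    case 0 then show ?case using r by simp
  next
    case (Suc j)
    have "x (K + Suc j) \<le> \<theta> * x (K+j) + e (K+j)" using rec[of "K+j"] by simp
    also have "\<dots> \<le> \<theta> * (\<theta>^j * x K + r/2) + (1-\<theta>) * r / 2"
      using Suc th K[of "K+j"] by (intro add_mono mult_left_mono) auto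
    also have "\<dots> = \<theta>^Suc j * x K + r/2" by (simp add: field_simps)
    finally show ?case .
  qed
  have "(\<lambda>j. \<theta>^j * x K) \<longlonglongrightarrow> 0" using th by (intro tendsto_mult_left_zero LIMSEQ_power_zero) auto
  then obtain J where J: "\<And>j. j \<ge> J \<Longrightarrow> norm (\<theta>^j * x K) < r/2"
    using LIMSEQ_D[of _ 0 "r/2"] r by (metis half_gt_zero_iff diff_zero)
  show "\<exists>no. \<forall>n\<ge>no. norm (x n - 0) < r"
  proof (intro exI allI impI)
    fix n assume n: "n \<ge> K + J"
    have "x n = x (K + (n-K))" using n by simp
    also have "\<dots> \<le> \<theta>^(n-K) * x K + r/2" by (rule ind)
    also have "\<dots> < r"
    proof -
      have "J \<le> n - K" using n by simp
      then show ?thesis using J[of "n-K"] abs_ge_self[of "\<theta>^(n-K) * x K"] by simp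
    qed
    finally show "norm (x n - 0) < r" using x0[of n] by simp
  qed
qed

lemma sum_list_bool:
  fixes g :: "bool \<Rightarrow> real"
  shows "sum_list (map g xs) = real (count_list xs True) * g True + real (count_list xs False) * g False"
  by (induction xs) (auto simp: algebra_simps)

lemma count_list_bool: "count_list xs True + count_list xs False = length xs"
  by (induction xs) auto

locale csubst =
  fixes \<zeta> :: "bool \<Rightarrow> bool list" and q :: nat
  assumes cl: "const_length_subst \<zeta> q" and prim: "primitive_subst \<zeta>"
begin

abbreviation sw where "sw \<equiv> subst_word \<zeta>"

lemma q2: "q \<ge> 2" and lz: "length (\<zeta> a) = q"
  using cl unfolding const_length_subst_def by auto

lemma sw_append: "sw (u @ v) = sw u @ sw v"
  unfolding subst_word_def by simp

lemma sw_nil: "sw [] = []" unfolding subst_word_def by simp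
lemma sw_single: "sw [a] = \<zeta> a" unfolding subst_word_def by simp

lemma swk_append: "(sw ^^ k) (u @ v) = (sw ^^ k) u @ (sw ^^ k) v"
  by (induction k) (auto simp: sw_append)

lemma swk_nil: "(sw ^^ k) [] = []"
  by (induction k) (auto simp: sw_nil)

lemma swk_concat: "(sw ^^ k) xs = concat (map (\<lambda>b. (sw ^^ k) [b]) xs)"
proof (induction xs)
  case Nil then show ?case by (simp add: swk_nil)
next
  case (Cons x xs)
  have "(sw ^^ k) (x # xs) = (sw ^^ k) ([x] @ xs)" by simp
  also have "\<dots> = (sw ^^ k) [x] @ (sw ^^ k) xs" by (rule swk_append)
  finally show ?case using Cons by simp
qed

lemma swk_Suc: "(sw ^^ Suc k) [a] = (sw ^^ k) (\<zeta> a)"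
  by (simp add: funpow_Suc_right sw_single del: funpow.simps)

lemma swk_add: "(sw ^^ (k + j)) x = (sw ^^ k) ((sw ^^ j) x)"
  by (simp add: funpow_add)

lemma length_sw: "length (sw x) = q * length x"
  unfolding subst_word_def by (induction x) (auto simp: lz)

lemma length_swk: "length ((sw ^^ k) x) = q ^ k * length x"
  by (induction k) (auto simp: length_sw)

lemma sw_lang: "x \<in> subst_language \<zeta> \<Longrightarrow> sw x \<in> subst_language \<zeta>"
proof -
  assume "x \<in> subst_language \<zeta>"
  then obtain k a u v where e: "(sw ^^ k) [a] = u @ x @ v" unfolding subst_language_def by auto
  have "(sw ^^ Suc k) [a] = sw u @ sw x @ sw v" using e by (simp add: sw_append)
  thus ?thesis unfolding subst_language_def by blast
qed

lemma take_lang: "x \<in> subst_language \<zeta> \<Longrightarrow> take n x \<in> subst_language \<zeta>"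
proof -
  assume "x \<in> subst_language \<zeta>"
  then obtain k a u v where e: "(sw ^^ k) [a] = u @ x @ v" unfolding subst_language_def by auto
  have "(sw ^^ k) [a] = u @ take n x @ (drop n x @ v)" using e by simp
  thus ?thesis unfolding subst_language_def by blast
qed

definition nT :: "bool \<Rightarrow> nat" where "nT a = count_list (\<zeta> a) True"

lemma nT_le: "nT a \<le> q" unfolding nT_def using count_list_bool[of "\<zeta> a"] lz[of a] by linarith

lemma closed_set:
  assumes "\<forall>b\<in>S. set (\<zeta> b) \<subseteq> S"
  shows "set x \<subseteq> S \<Longrightarrow> set ((sw ^^ k) x) \<subseteq> S"
proof (induction k arbitrary: x)
  case 0 then show ?case by simp
next
  case (Suc k)
  have "set (sw x) \<subseteq> S" using Suc.prems assms unfolding subst_word_def by auto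
  then show ?case using Suc.IH[of "sw x"] by (simp add: funpow_Suc_right del: funpow.simps)
qed

lemma const_set:
  assumes "\<forall>b. \<exists>c. set (\<zeta> b) \<subseteq> {c}"
  shows "set x \<subseteq> {c} \<Longrightarrow> \<exists>c'. set ((sw ^^ k) x) \<subseteq> {c'}"
proof (induction k arbitrary: x c)
  case 0 then show ?case by auto
next
  case (Suc k)
  obtain d where d: "set (\<zeta> c) \<subseteq> {d}" using assms by blast
  have "set (sw x) \<subseteq> {d}" using Suc.prems d unfolding subst_word_def by auto
  then show ?case using Suc.IH[of "sw x" d] by (simp add: funpow_Suc_right del: funpow.simps)
qed

lemma prim_letters: "nT False \<ge> 1" "nT True < q" "\<not> (nT False = q \<and> nT True = 0)"
proof -
  obtain k where k: "\<And>a b. b \<in> set ((sw ^^ k) [a])" using prim unfolding primitive_subst_def by blast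
  show "nT False \<ge> 1"
  proof (rule ccontr)
    assume "\<not> nT False \<ge> 1"
    hence "True \<notin> set (\<zeta> False)" unfolding nT_def using count_list_0_iff by force
    hence "set (\<zeta> False) \<subseteq> {False}" by auto
    hence "set ((sw ^^ k) [False]) \<subseteq> {False}" by (intro closed_set) auto
    thus False using k[of True False] by auto
  qed
  show "nT True < q"
  proof (rule ccontr)
    assume "\<not> nT True < q"
    hence "count_list (\<zeta> True) False = 0" unfolding nT_def using count_list_bool[of "\<zeta> True"] lz[of True] by linarith
    hence "False \<notin> set (\<zeta> True)" using count_list_0_iff by force
    hence "set (\<zeta> True) \<subseteq> {True}" by (metis (full_types) singletonI subsetI)
    hence "set ((sw ^^ k) [True]) \<subseteq> {True}" by (intro closed_set) auto
    thus False using k[of False True] by auto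
  qed
  show "\<not> (nT False = q \<and> nT True = 0)"
  proof
    assume A: "nT False = q \<and> nT True = 0"
    hence "count_list (\<zeta> False) False = 0" unfolding nT_def using count_list_bool[of "\<zeta> False"] lz[of False] by linarith
    hence "set (\<zeta> False) \<subseteq> {True}" using count_list_0_iff by force
    moreover have "set (\<zeta> True) \<subseteq> {False}" using A count_list_0_iff unfolding nT_def by force
    ultimately have "\<forall>b. \<exists>c. set (\<zeta> b) \<subseteq> {c}" by (metis (full_types))
    then obtain c where "set ((sw ^^ k) [False]) \<subseteq> {c}" using const_set[of "[False]" False k] by auto
    moreover have "True \<in> set ((sw ^^ k) [False])" "False \<in> set ((sw ^^ k) [False])" using k by auto
    ultimately show False by auto
  qed
qed

definition theta :: real where "theta = \<bar>real (nT True) - real (nT False)\<bar> / real q"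

lemma theta: "0 \<le> theta" "theta < 1"
proof -
  have "q > 0" using q2 by simp
  moreover have "\<bar>real (nT True) - real (nT False)\<bar> < real q"
    using prim_letters nT_le[of True] nT_le[of False] by linarith
  ultimately show "0 \<le> theta" "theta < 1" unfolding theta_def by auto
qed


definition vv :: "bool list \<Rightarrow> nat \<Rightarrow> bool \<Rightarrow> nat" where "vv w k a = occ w ((sw ^^ k) [a])"
definition ff :: "bool list \<Rightarrow> nat \<Rightarrow> bool \<Rightarrow> real" where "ff w k a = real (vv w k a) / real q ^ k"

lemma qpos: "real q > 0" using q2 by simp

lemma ff_bounds: assumes "w \<noteq> []" shows "0 \<le> ff w k a" "ff w k a \<le> 1"
proof -
  have "vv w k a \<le> q ^ k" unfolding vv_def using occ_le[OF assms, of "(sw ^^ k) [a]"] length_swk[of k "[a]"] by simp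
  hence "real (vv w k a) \<le> real q ^ k" by (metis of_nat_le_iff of_nat_power)
  thus "ff w k a \<le> 1" unfolding ff_def using qpos by (simp add: divide_le_eq_1)
  show "0 \<le> ff w k a" unfolding ff_def by simp
qed

lemma real_sum_list: "real (sum_list (map f xs)) = sum_list (map (\<lambda>b. real (f b)) xs)"
  by (induction xs) auto

lemma vv_Suc:
  assumes "w \<noteq> []"
  shows "real (nT a) * real (vv w k True) + real (q - nT a) * real (vv w k False) \<le> real (vv w (Suc k) a)"
    "real (vv w (Suc k) a) \<le> real (nT a) * real (vv w k True) + real (q - nT a) * real (vv w k False) + real q * real (length w)"
proof -
  have e: "vv w (Suc k) a = occ w (concat (map (\<lambda>b. (sw ^^ k) [b]) (\<zeta> a)))"
    unfolding vv_def swk_Suc by (subst swk_concat) simp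
  have s: "real (sum_list (map (occ w) (map (\<lambda>b. (sw ^^ k) [b]) (\<zeta> a)))) =
       real (nT a) * real (vv w k True) + real (q - nT a) * real (vv w k False)"
  proof -
    have "real (sum_list (map (occ w) (map (\<lambda>b. (sw ^^ k) [b]) (\<zeta> a)))) = sum_list (map (\<lambda>b. real (vv w k b)) (\<zeta> a))"
      unfolding vv_def by (simp add: real_sum_list comp_def)
    also have "\<dots> = real (count_list (\<zeta> a) True) * real (vv w k True) + real (count_list (\<zeta> a) False) * real (vv w k False)"
      by (rule sum_list_bool)
    also have "count_list (\<zeta> a) False = q - nT a" unfolding nT_def using count_list_bool[of "\<zeta> a"] lz[of a] by simp
    finally show ?thesis unfolding nT_def by simp
  qed
  show "real (nT a) * real (vv w k True) + real (q - nT a) * real (vv w k False) \<le> real (vv w (Suc k) a)"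
    using occ_concat(1)[OF assms, of "map (\<lambda>b. (sw ^^ k) [b]) (\<zeta> a)"] unfolding e s[symmetric] by linarith
  show "real (vv w (Suc k) a) \<le> real (nT a) * real (vv w k True) + real (q - nT a) * real (vv w k False) + real q * real (length w)"
    using occ_concat(2)[OF assms, of "map (\<lambda>b. (sw ^^ k) [b]) (\<zeta> a)"] unfolding e s[symmetric]
    by (simp add: lz) (metis of_nat_add of_nat_le_iff of_nat_mult)
qed

lemma ff_Suc:
  assumes "w \<noteq> []"
  obtains e where "0 \<le> e" "e \<le> real (length w) / real q ^ k"
    "ff w (Suc k) a = (real (nT a) / real q) * ff w k True + (real (q - nT a) / real q) * ff w k False + e"
proof -
  define e where "e = ff w (Suc k) a - ((real (nT a) / real q) * ff w k True + (real (q - nT a) / real q) * ff w k False)"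
  have qk: "real q ^ Suc k > 0" using qpos by simp
  have eq: "(real (nT a) / real q) * ff w k True + (real (q - nT a) / real q) * ff w k False
      = (real (nT a) * real (vv w k True) + real (q - nT a) * real (vv w k False)) / real q ^ Suc k"
    unfolding ff_def using qpos by (simp add: field_simps)
  have "(real (nT a) * real (vv w k True) + real (q - nT a) * real (vv w k False)) / real q ^ Suc k
     \<le> real (vv w (Suc k) a) / real q ^ Suc k"
    using vv_Suc(1)[OF assms, of a k] qk by (intro divide_right_mono) auto
  hence "0 \<le> e" unfolding e_def using eq ff_def[of w "Suc k" a] by linarith
  moreover have "e \<le> real (length w) / real q ^ k"
  proof -
    have "e = (real (vv w (Suc k) a) - (real (nT a) * real (vv w k True) + real (q - nT a) * real (vv w k False))) / real q ^ Suc k"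
      unfolding e_def using eq ff_def[of w "Suc k" a] by (simp add: diff_divide_distrib)
    also have "\<dots> \<le> (real q * real (length w)) / real q ^ Suc k"
      using vv_Suc(2)[OF assms, of k a] qk by (intro divide_right_mono) auto
    also have "\<dots> = real (length w) / real q ^ k" using qpos by simp
    finally show ?thesis .
  qed
  moreover have "ff w (Suc k) a = (real (nT a) / real q) * ff w k True + (real (q - nT a) / real q) * ff w k False + e"
    unfolding e_def by simp
  ultimately show ?thesis using that by blast
qed

definition lo :: "bool list \<Rightarrow> nat \<Rightarrow> real" where "lo w k = min (ff w k False) (ff w k True)"
definition dd :: "bool list \<Rightarrow> nat \<Rightarrow> real" where "dd w k = \<bar>ff w k True - ff w k False\<bar>"

lemma convex_ge_min:
  fixes s t a b :: real
  assumes "0 \<le> s" "0 \<le> t" "s + t = 1"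
  shows "s * a + t * b \<ge> min b a"
proof -
  have "s * a + t * b \<ge> s * min b a + t * min b a" using assms by (intro add_mono mult_left_mono) auto
  thus ?thesis using assms by (simp add: algebra_simps) (metis mult_1 distrib_right)
qed

lemma lo_mono: assumes "w \<noteq> []" shows "lo w k \<le> lo w (Suc k)"
proof -
  have st: "0 \<le> real (nT a) / real q" "0 \<le> real (q - nT a) / real q"
    "real (nT a) / real q + real (q - nT a) / real q = 1" for a
    using qpos nT_le[of a] by (auto simp: field_simps of_nat_diff)
  have "lo w k \<le> ff w (Suc k) a" for a
  proof -
    obtain e where e: "0 \<le> e" "ff w (Suc k) a = (real (nT a) / real q) * ff w k True + (real (q - nT a) / real q) * ff w k False + e"
      using ff_Suc[OF assms, of k a] by blast
    show ?thesis unfolding lo_def e(2) using convex_ge_min[OF st(1)[of a] st(2)[of a] st(3)[of a], where a="ff w k True" and b="ff w k False"] e(1)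
      by linarith
  qed
  thus ?thesis unfolding lo_def[of w "Suc k"] by simp
qed

lemma dd_rec: assumes "w \<noteq> []" shows "dd w (Suc k) \<le> theta * dd w k + real (length w) / real q ^ k"
proof -
  obtain e1 where e1: "0 \<le> e1" "e1 \<le> real (length w) / real q ^ k"
    "ff w (Suc k) True = (real (nT True) / real q) * ff w k True + (real (q - nT True) / real q) * ff w k False + e1"
    using ff_Suc[OF assms] by blast
  obtain e0 where e0: "0 \<le> e0" "e0 \<le> real (length w) / real q ^ k"
    "ff w (Suc k) False = (real (nT False) / real q) * ff w k True + (real (q - nT False) / real q) * ff w k False + e0"
    using ff_Suc[OF assms] by blast
  have "ff w (Suc k) True - ff w (Suc k) False =
     ((real (nT True) - real (nT False)) / real q) * (ff w k True - ff w k False) + (e1 - e0)"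
    unfolding e1(3) e0(3) using qpos nT_le[of True] nT_le[of False] by (simp add: of_nat_diff field_simps)
  hence "dd w (Suc k) \<le> \<bar>(real (nT True) - real (nT False)) / real q\<bar> * dd w k + \<bar>e1 - e0\<bar>"
    unfolding dd_def by (metis abs_mult abs_triangle_ineq)
  also have "\<bar>(real (nT True) - real (nT False)) / real q\<bar> = theta" unfolding theta_def using qpos by simp
  finally show ?thesis using e1 e0 by linarith
qed

definition mu :: "bool list \<Rightarrow> real" where "mu w = lim (lo w)"

lemma lo_conv: assumes "w \<noteq> []" shows "lo w \<longlonglongrightarrow> mu w" "\<And>k. lo w k \<le> mu w"
proof -
  have inc: "incseq (lo w)" using lo_mono[OF assms] by (rule incseq_SucI)
  have "\<forall>i. lo w i \<le> 1" unfolding lo_def using ff_bounds[OF assms] by (simp add: min.coboundedI1)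
  then obtain L where L: "lo w \<longlonglongrightarrow> L" using incseq_convergent[OF inc] by metis
  thus "lo w \<longlonglongrightarrow> mu w" unfolding mu_def using limI by metis
  thus "\<And>k. lo w k \<le> mu w" using incseq_le[OF inc] by blast
qed

lemma dd_conv: assumes "w \<noteq> []" shows "dd w \<longlonglongrightarrow> 0"
proof (rule contract_to_zero[where \<theta>=theta and e="\<lambda>k. real (length w) / real q ^ k"])
  show "\<And>k. dd w (Suc k) \<le> theta * dd w k + real (length w) / real q ^ k" by (rule dd_rec[OF assms])
  show "0 \<le> theta" "theta < 1" by (rule theta)+
  show "\<And>k. 0 \<le> dd w k" unfolding dd_def by simp
  have "(\<lambda>k. real (length w) * (1 / real q) ^ k) \<longlonglongrightarrow> 0"
    using q2 by (intro tendsto_mult_right_zero LIMSEQ_power_zero) auto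
  thus "(\<lambda>k. real (length w) / real q ^ k) \<longlonglongrightarrow> 0" by (simp add: divide_inverse power_inverse)
qed

lemma ff_close:
  assumes "w \<noteq> []" "\<eta> > 0"
  shows "\<exists>K. \<forall>k\<ge>K. \<forall>a. \<bar>ff w k a - mu w\<bar> \<le> \<eta>"
proof -
  obtain K1 where K1: "\<And>k. k \<ge> K1 \<Longrightarrow> norm (lo w k - mu w) < \<eta>"
    using LIMSEQ_D[OF lo_conv(1)[OF assms(1)] assms(2)] by blast
  obtain K2 where K2: "\<And>k. k \<ge> K2 \<Longrightarrow> norm (dd w k - 0) < \<eta>"
    using LIMSEQ_D[OF dd_conv[OF assms(1)] assms(2)] by blast
  show ?thesis
  proof (intro exI[of _ "K1 + K2"] allI impI)
    fix k a assume k: "K1 + K2 \<le> k"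
    have "lo w k \<le> ff w k a" "ff w k a \<le> lo w k + dd w k" unfolding lo_def dd_def by (cases a; auto)+
    moreover have "lo w k \<le> mu w" by (rule lo_conv(2)[OF assms(1)])
    moreover have "\<bar>lo w k - mu w\<bar> < \<eta>" "\<bar>dd w k\<bar> < \<eta>" using K1[of k] K2[of k] k by auto
    ultimately show "\<bar>ff w k a - mu w\<bar> \<le> \<eta>" by linarith
  qed
qed

lemma mu_bounds: assumes "w \<noteq> []" shows "0 \<le> mu w" "mu w \<le> 1"
proof -
  have "\<And>k. 0 \<le> lo w k" "\<And>k. lo w k \<le> 1" unfolding lo_def using ff_bounds[OF assms] by (auto simp: min_le_iff_disj)
  thus "0 \<le> mu w" "mu w \<le> 1" using lo_conv[OF assms]
    by (auto intro: LIMSEQ_le_const LIMSEQ_le_const2)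
qed

end



lemma block_lower:
  assumes bl: "\<forall>b\<in>set bs. length b = B" and B: "B > 0" and w: "w \<noteq> []"
    and x: "x = take M (drop s (concat bs))" and sM: "s + M \<le> length (concat bs)" and M: "M \<ge> 2*B"
  shows "\<exists>mbs. set mbs \<subseteq> set bs \<and> occ w (concat mbs) \<le> occ w x \<and> M \<le> length mbs * B + 2*B"
proof -
  define j0 where "j0 = (s + B - 1) div B"
  define T where "T = (s + M) div B"
  define t where "t = T - j0"
  have j0a: "s \<le> j0 * B" using mod_div_mult_eq[of "s+B-1" B] mod_less_divisor[OF B, of "s+B-1"]
    unfolding j0_def by linarith
  have j0b: "j0 * B \<le> s + B - 1" unfolding j0_def by simp
  have Ta: "T * B \<le> s + M" unfolding T_def by simp
  have Tb: "s + M < T * B + B" using mod_div_mult_eq[of "s+M" B] mod_less_divisor[OF B, of "s+M"]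
    unfolding T_def by linarith
  have j0T: "j0 \<le> T" unfolding j0_def T_def using M by (intro div_le_mono) linarith
  have tB: "t * B = T * B - j0 * B" unfolding t_def by (simp add: diff_mult_distrib)
  define mbs where "mbs = take t (drop j0 bs)"
  have bl2: "\<forall>b\<in>set (drop j0 bs). length b = B" using bl by (meson in_set_dropD)
  have lenU: "length (concat bs) = length bs * B" by (rule length_concat_blocks[OF bl])
  have Tle: "T \<le> length bs"
  proof -
    have "T * B < (length bs + 1) * B" using Ta sM lenU B by (simp add: algebra_simps)
    hence "T < length bs + 1" using mult_less_cancel2 by blast
    thus ?thesis by simp
  qed
  have lm: "length mbs = t" unfolding mbs_def t_def using Tle by simp
  have "concat mbs = take (t * B) (concat (drop j0 bs))"
    unfolding mbs_def by (rule take_concat_blocks[OF bl2, symmetric])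
  also have "concat (drop j0 bs) = drop (j0 * B) (concat bs)" by (rule drop_concat_blocks[OF bl, symmetric])
  finally have cm: "concat mbs = take (t * B) (drop (j0 * B) (concat bs))" .
  have "drop (j0 * B - s) x = take (M - (j0*B - s)) (drop (j0 * B) (concat bs))"
    unfolding x drop_take drop_drop using j0a by simp
  hence "take (t * B) (drop (j0 * B - s) x) = concat mbs"
    unfolding cm using tB Ta j0a j0T by (simp add: min_def)
  hence "occ w (concat mbs) \<le> occ w x" using occ_take occ_drop[OF w] by (metis order_trans)
  moreover have "set mbs \<subseteq> set bs" unfolding mbs_def by (meson in_set_dropD in_set_takeD subsetI)
  moreover have "M \<le> length mbs * B + 2*B" unfolding lm using tB Tb j0b j0T j0a by (simp add: mult_le_mono1)
  ultimately show ?thesis by blast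
qed


lemma block_upper:
  assumes bl: "\<forall>b\<in>set bs. length b = B" and B: "B > 0" and w: "w \<noteq> []"
    and x: "x = take M (drop s (concat bs))"
  shows "\<exists>cbs. set cbs \<subseteq> set bs \<and> occ w x \<le> occ w (concat cbs) \<and> length cbs * B \<le> M + 2*B"
proof -
  define j1 where "j1 = s div B"
  define T where "T = (s + M + B - 1) div B"
  define t where "t = T - j1"
  have j1a: "j1 * B \<le> s" unfolding j1_def by simp
  have j1b: "s < j1 * B + B" using mod_div_mult_eq[of s B] mod_less_divisor[OF B, of s]
    unfolding j1_def by linarith
  have Ta: "T * B \<le> s + M + B - 1" unfolding T_def by simp
  have Tb: "s + M \<le> T * B" using mod_div_mult_eq[of "s+M+B-1" B] mod_less_divisor[OF B, of "s+M+B-1"]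
    unfolding T_def by linarith
  have j1T: "j1 \<le> T" unfolding j1_def T_def by (intro div_le_mono) (use B in linarith)
  have tB: "t * B = T * B - j1 * B" unfolding t_def by (simp add: diff_mult_distrib)
  define cbs where "cbs = take t (drop j1 bs)"
  have bl2: "\<forall>b\<in>set (drop j1 bs). length b = B" using bl by (meson in_set_dropD)
  have "concat cbs = take (t * B) (concat (drop j1 bs))"
    unfolding cbs_def by (rule take_concat_blocks[OF bl2, symmetric])
  also have "concat (drop j1 bs) = drop (j1 * B) (concat bs)" by (rule drop_concat_blocks[OF bl, symmetric])
  finally have cm: "concat cbs = take (t * B) (drop (j1 * B) (concat bs))" .
  have "take M (drop (s - j1 * B) (concat cbs)) = take M (take (t * B - (s - j1 * B)) (drop s (concat bs)))"
    unfolding cm drop_take drop_drop using j1a by simp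
  also have "\<dots> = x" unfolding x using tB Tb j1a j1T by (simp add: min_def)
  finally have "occ w x \<le> occ w (concat cbs)"
    using occ_take[of w M "drop (s - j1 * B) (concat cbs)"] occ_drop[OF w, of "s - j1 * B" "concat cbs"] by simp
  moreover have "set cbs \<subseteq> set bs" unfolding cbs_def by (meson in_set_dropD in_set_takeD subsetI)
  moreover have "length cbs * B \<le> M + 2*B"
  proof -
    have "length cbs \<le> t" unfolding cbs_def by simp
    hence "length cbs * B \<le> t * B" by simp
    thus ?thesis using tB Ta j1b j1T by linarith
  qed
  ultimately show ?thesis by blast
qed


lemma arith_final:
  fixes Oc M B L Lc \<mu> \<eta> :: real
  assumes e: "0 < \<eta>" "\<eta> \<le> 1" and mu: "0 \<le> \<mu>" "\<mu> \<le> 1" and B: "B > 0" and MB: "16 * B \<le> \<eta> * M"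
    and O0: "0 \<le> Oc" and low: "\<mu> - \<eta>/4 > 0 \<Longrightarrow> L * (B * (\<mu> - \<eta>/4)) \<le> Oc" and L: "M \<le> L * B + 2*B"
    and up: "Oc \<le> Lc * (B * (\<mu> + \<eta>/2))" and Lc: "Lc * B \<le> M + 2*B"
  shows "\<bar>Oc / M - \<mu>\<bar> \<le> \<eta>"
proof -
  have M: "M > 0"
  proof (rule ccontr)
    assume "\<not> M > 0"
    hence "\<eta> * M \<le> 0" using e by (simp add: mult_nonneg_nonpos)
    thus False using MB B by linarith
  qed
  have u1: "Lc * (B * (\<mu> + \<eta>/2)) \<le> (M + 2*B) * (\<mu> + \<eta>/2)"
    using Lc mu e by (simp add: mult.assoc[symmetric] mult_right_mono)
  have u2: "(M + 2*B) * (\<mu> + \<eta>/2) = M * (\<mu> + \<eta>/2) + 2*B*(\<mu> + \<eta>/2)" by (simp add: algebra_simps)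
  have u3: "2*B*(\<mu> + \<eta>/2) \<le> 3*B"
  proof -
    have "2*B*(\<mu> + \<eta>/2) \<le> 2*B*(3/2)" using mu e B by (intro mult_left_mono) auto
    thus ?thesis by simp
  qed
  have u4: "M * (\<mu> + \<eta>) = M * (\<mu> + \<eta>/2) + \<eta> * M / 2" by (simp add: algebra_simps)
  have upper: "Oc \<le> M * (\<mu> + \<eta>)" using up u1 u2 u3 u4 MB B by linarith
  have lower: "M * (\<mu> - \<eta>) \<le> Oc"
  proof (cases "\<mu> - \<eta>/4 > 0")
    case False
    hence "\<mu> - \<eta> \<le> 0" using e by simp
    hence "M * (\<mu> - \<eta>) \<le> 0" using M by (simp add: mult_nonneg_nonpos)
    then show ?thesis using O0 by simp
  next
    case True
    have l1: "(M - 2*B) * (\<mu> - \<eta>/4) \<le> L * B * (\<mu> - \<eta>/4)" using L True by (intro mult_right_mono) auto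
    have l2: "(M - 2*B) * (\<mu> - \<eta>/4) = M * (\<mu> - \<eta>/4) - 2*B*(\<mu> - \<eta>/4)" by (simp add: algebra_simps)
    have l3: "2*B*(\<mu> - \<eta>/4) \<le> 2*B" using mu e B by (simp add: mult_left_le)
    have l4: "M * (\<mu> - \<eta>) = M * (\<mu> - \<eta>/4) - 3 * (\<eta> * M) / 4" by (simp add: algebra_simps)
    have l5: "L * (B * (\<mu> - \<eta>/4)) = L * B * (\<mu> - \<eta>/4)" by (simp add: algebra_simps)
    show ?thesis using low[OF True] l1 l2 l3 l4 l5 MB B by linarith
  qed
  have "Oc / M \<le> \<mu> + \<eta>" using upper M by (simp add: divide_le_eq mult.commute)
  moreover have "\<mu> - \<eta> \<le> Oc / M" using lower M by (simp add: le_divide_eq mult.commute)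
  ultimately show ?thesis by linarith
qed


lemma sum_list_lower:
  fixes f :: "'a \<Rightarrow> real"
  shows "(\<forall>b\<in>set xs. c \<le> f b) \<Longrightarrow> real (length xs) * c \<le> sum_list (map f xs)"
  by (induction xs) (auto simp: algebra_simps)

lemma sum_list_upper:
  fixes f :: "'a \<Rightarrow> real"
  shows "(\<forall>b\<in>set xs. f b \<le> c) \<Longrightarrow> sum_list (map f xs) \<le> real (length xs) * c"
  by (induction xs) (auto simp: algebra_simps)

context csubst begin

lemma freq_lang:
  assumes w: "w \<noteq> []" and eta: "\<eta> > 0"
  shows "\<exists>N0. \<forall>x. x \<in> subst_language \<zeta> \<longrightarrow> length x \<ge> N0 \<longrightarrow>
           \<bar>real (occ w x) / real (length x) - mu w\<bar> \<le> \<eta>"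
proof -
  define \<eta>1 where "\<eta>1 = min \<eta> 1"
  have e1: "0 < \<eta>1" "\<eta>1 \<le> 1" "\<eta>1 \<le> \<eta>" using eta unfolding \<eta>1_def by auto
  obtain K where K: "\<And>k a. k \<ge> K \<Longrightarrow> \<bar>ff w k a - mu w\<bar> \<le> \<eta>1/4"
    using ff_close[OF w, of "\<eta>1/4"] e1 by auto
  have q1: "real q > 1" using q2 by simp
  obtain k0 where k0: "4 * real (length w) / \<eta>1 < real q ^ k0" using real_arch_pow[OF q1] by blast
  define k where "k = K + k0"
  define B where "B = q ^ k"
  have B0: "B > 0" unfolding B_def using q2 by simp
  have "real q ^ k0 \<le> real q ^ k" unfolding k_def using q1 by (intro power_increasing) auto
  hence "4 * real (length w) / \<eta>1 < real B" using k0 unfolding B_def by simp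
  hence wB: "real (length w) \<le> real B * (\<eta>1/4)" using e1 by (simp add: field_simps)
  have blk: "real B * (mu w - \<eta>1/4) \<le> real (occ w ((sw ^^ k) [c])) \<and> real (occ w ((sw ^^ k) [c])) \<le> real B * (mu w + \<eta>1/4)" for c
  proof -
    have "real (occ w ((sw ^^ k) [c])) = ff w k c * real B" unfolding ff_def vv_def B_def using q2 by simp
    moreover have "real B * (mu w - \<eta>1/4) \<le> real B * ff w k c" "real B * ff w k c \<le> real B * (mu w + \<eta>1/4)"
    proof -
      have "\<bar>ff w k c - mu w\<bar> \<le> \<eta>1/4" using K[of k c] unfolding k_def by simp
      hence "mu w - \<eta>1/4 \<le> ff w k c" "ff w k c \<le> mu w + \<eta>1/4" by linarith+
      thus "real B * (mu w - \<eta>1/4) \<le> real B * ff w k c" "real B * ff w k c \<le> real B * (mu w + \<eta>1/4)"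
        by (auto intro!: mult_left_mono)
    qed
    ultimately show ?thesis by (simp add: mult.commute)
  qed
  define N0 where "N0 = nat \<lceil>16 * real B / \<eta>1\<rceil> + 2 * B + 1"
  show ?thesis
  proof (intro exI[of _ N0] allI impI)
    fix x assume xL: "x \<in> subst_language \<zeta>" and xN: "N0 \<le> length x"
    define M where "M = length x"
    have MB: "16 * real B \<le> \<eta>1 * real M"
    proof -
      have "16 * real B / \<eta>1 \<le> real M" using xN unfolding N0_def M_def by linarith
      thus ?thesis using e1 by (simp add: field_simps)
    qed
    have M2B: "M \<ge> 2 * B" "M > B" using xN unfolding N0_def M_def by auto
    obtain K' a u v where U: "(sw ^^ K') [a] = u @ x @ v" using xL unfolding subst_language_def by auto
    have "q ^ K' = length ((sw ^^ K') [a])" using length_swk[of K' "[a]"] by simp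
    also have "\<dots> \<ge> M" unfolding U M_def by simp
    finally have qK: "M \<le> q ^ K'" .
    have qk: "q ^ k < q ^ K'" using M2B(2) qK unfolding B_def by linarith
    have q1': "1 < q" using q2 by simp
    have kK: "k < K'" by (rule power_less_imp_less_exp[OF q1' qk])
    define ys where "ys = (sw ^^ (K' - k)) [a]"
    define bs where "bs = map (\<lambda>b. (sw ^^ k) [b]) ys"
    have Ubs: "(sw ^^ K') [a] = concat bs"
    proof -
      have kk: "(sw ^^ K') [a] = (sw ^^ (k + (K' - k))) [a]" using kK by simp
      have "(sw ^^ K') [a] = (sw ^^ k) ys" unfolding ys_def kk by (rule swk_add)
      thus ?thesis unfolding bs_def by (simp add: swk_concat[of k ys])
    qed
    have bl: "\<forall>b\<in>set bs. length b = B" unfolding bs_def B_def by (auto simp: length_swk)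
    have bocc: "\<And>b. b \<in> set bs \<Longrightarrow> real B * (mu w - \<eta>1/4) \<le> real (occ w b) \<and> real (occ w b) \<le> real B * (mu w + \<eta>1/4)"
      unfolding bs_def using blk by auto
    have xe: "x = take M (drop (length u) (concat bs))" unfolding Ubs[symmetric] U M_def by simp
    have sM: "length u + M \<le> length (concat bs)" unfolding Ubs[symmetric] U M_def by simp
    obtain mbs where mbs: "set mbs \<subseteq> set bs" "occ w (concat mbs) \<le> occ w x" "M \<le> length mbs * B + 2*B"
      using block_lower[OF bl B0 w xe sM M2B(1)] by blast
    obtain cbs where cbs: "set cbs \<subseteq> set bs" "occ w x \<le> occ w (concat cbs)" "length cbs * B \<le> M + 2*B"
      using block_upper[OF bl B0 w xe] by blast
    have low: "real (length mbs) * (real B * (mu w - \<eta>1/4)) \<le> real (occ w x)"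
    proof -
      have "real (length mbs) * (real B * (mu w - \<eta>1/4)) \<le> sum_list (map (\<lambda>b. real (occ w b)) mbs)"
        using bocc mbs(1) by (intro sum_list_lower) auto
      also have "\<dots> = real (sum_list (map (occ w) mbs))" by (simp add: real_sum_list comp_def)
      also have "\<dots> \<le> real (occ w x)" using occ_concat(1)[OF w, of mbs] mbs(2) by simp
      finally show ?thesis .
    qed
    have up: "real (occ w x) \<le> real (length cbs) * (real B * (mu w + \<eta>1/2))"
    proof -
      have "real (occ w x) \<le> real (sum_list (map (occ w) cbs)) + real (length cbs) * real (length w)"
      proof -
        have "occ w x \<le> sum_list (map (occ w) cbs) + length cbs * length w"
          using occ_concat(2)[OF w, of cbs] cbs(2) by linarith
        hence "real (occ w x) \<le> real (sum_list (map (occ w) cbs) + length cbs * length w)" by (simp only: of_nat_le_iff)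
        thus ?thesis by simp
      qed
      also have "real (sum_list (map (occ w) cbs)) = sum_list (map (\<lambda>b. real (occ w b)) cbs)"
        by (simp add: real_sum_list comp_def)
      also have "\<dots> \<le> real (length cbs) * (real B * (mu w + \<eta>1/4))"
        using bocc cbs(1) by (intro sum_list_upper) auto
      also have "real (length cbs) * (real B * (mu w + \<eta>1/4)) + real (length cbs) * real (length w)
          \<le> real (length cbs) * (real B * (mu w + \<eta>1/4)) + real (length cbs) * (real B * (\<eta>1/4))"
        using wB by (intro add_left_mono mult_left_mono) auto
      also have "\<dots> = real (length cbs) * (real B * (mu w + \<eta>1/2))" by (simp add: algebra_simps)
      finally show ?thesis by simp
    qed
    have "\<bar>real (occ w x) / real M - mu w\<bar> \<le> \<eta>1"
    proof (rule arith_final[OF e1(1,2) mu_bounds[OF w] _ MB])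
      show "0 < real B" using B0 by simp
      show "0 \<le> real (occ w x)" by simp
      show "real (length mbs) * (real B * (mu w - \<eta>1 / 4)) \<le> real (occ w x)" by (rule low)
      show "real M \<le> real (length mbs) * real B + 2 * real B" 
      proof -
        have "real M \<le> real (length mbs * B + 2*B)" using mbs(3) by (simp only: of_nat_le_iff)
        thus ?thesis by simp
      qed
      show "real (occ w x) \<le> real (length cbs) * (real B * (mu w + \<eta>1 / 2))" by (rule up)
      show "real (length cbs) * real B \<le> real M + 2 * real B" 
      proof -
        have "real (length cbs * B) \<le> real (M + 2*B)" using cbs(3) by (simp only: of_nat_le_iff)
        thus ?thesis by simp
      qed
    qed
    thus "\<bar>real (occ w x) / real (length x) - mu w\<bar> \<le> \<eta>" using e1 unfolding M_def by linarith
  qed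
qed

end




context csubst begin

definition cnt :: "(nat \<Rightarrow> bool) \<Rightarrow> bool list \<Rightarrow> nat \<Rightarrow> nat" where
  "cnt y w N = card {i. i < N \<and> map y [i..<i + length w] = w}"

lemma cnt_occ:
  assumes w: "w \<noteq> []" and N: "N \<ge> 1"
  shows "cnt y w N = occ w (map y [0..<N + length w - 1])"
proof -
  have lw: "length w \<ge> 1" using w by (cases w) auto
  have "{i. i < N \<and> map y [i..<i + length w] = w} =
        {i. i + length w \<le> length (map y [0..<N + length w - 1]) \<and> take (length w) (drop i (map y [0..<N + length w - 1])) = w}"
  proof (intro set_eqI iffI)
    fix i assume "i \<in> {i. i < N \<and> map y [i..<i + length w] = w}"
    hence i: "i < N" "map y [i..<i + length w] = w" by auto
    have le: "i + length w \<le> N + length w - 1" using i lw by linarith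
    show "i \<in> {i. i + length w \<le> length (map y [0..<N + length w - 1]) \<and> take (length w) (drop i (map y [0..<N + length w - 1])) = w}"
      using i le by (simp add: drop_map take_map)
  next
    fix i assume "i \<in> {i. i + length w \<le> length (map y [0..<N + length w - 1]) \<and> take (length w) (drop i (map y [0..<N + length w - 1])) = w}"
    hence i: "i + length w \<le> N + length w - 1" "take (length w) (drop i (map y [0..<N + length w - 1])) = w" by auto
    have "i < N" using i(1) lw by linarith
    moreover have "map y [i..<i + length w] = w" using i by (simp add: drop_map take_map)
    ultimately show "i \<in> {i. i < N \<and> map y [i..<i + length w] = w}" by simp
  qed
  thus ?thesis unfolding cnt_def occ_def by simp
qed

lemma prefix_lang: "y \<in> subshift \<zeta> \<Longrightarrow> map y [0..<n] \<in> subst_language \<zeta>"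
  unfolding subshift_def by auto

lemma freq_seq:
  assumes y: "y \<in> subshift \<zeta>" and w: "w \<noteq> []"
  shows "(\<lambda>N. real (cnt y w N) / real N) \<longlonglongrightarrow> mu w"
proof -
  define X where "X = (\<lambda>N. map y [0..<N + length w - 1])"
  have lenX: "length (X N) = N + length w - 1" for N unfolding X_def by simp
  have lw: "length w \<ge> 1" using w by (cases w) auto
  have A: "(\<lambda>N. real (occ w (X N)) / real (length (X N))) \<longlonglongrightarrow> mu w"
  proof (rule LIMSEQ_I)
    fix r :: real assume r: "r > 0"
    obtain N0 where N0: "\<And>x. x \<in> subst_language \<zeta> \<Longrightarrow> length x \<ge> N0 \<Longrightarrow> \<bar>real (occ w x) / real (length x) - mu w\<bar> \<le> r/2"
      using freq_lang[OF w, of "r/2"] r by auto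
    show "\<exists>no. \<forall>n\<ge>no. norm (real (occ w (X n)) / real (length (X n)) - mu w) < r"
    proof (intro exI allI impI)
      fix n assume "n \<ge> N0"
      hence "length (X n) \<ge> N0" unfolding lenX using lw by linarith
      moreover have "X n \<in> subst_language \<zeta>" unfolding X_def by (rule prefix_lang[OF y])
      ultimately have "\<bar>real (occ w (X n)) / real (length (X n)) - mu w\<bar> \<le> r/2"
        using N0 by blast
      thus "norm (real (occ w (X n)) / real (length (X n)) - mu w) < r" using r by simp
    qed
  qed
  have B: "(\<lambda>N. real (length (X N)) / real N) \<longlonglongrightarrow> 1"
  proof -
    have "(\<lambda>N::nat. (real N + (real (length w) - 1)) / real N) \<longlonglongrightarrow> 1" by real_asymp
    moreover have "real (length (X N)) = real N + (real (length w) - 1)" for N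
      unfolding lenX using lw by (simp add: of_nat_diff)
    ultimately show ?thesis by simp
  qed
  have "(\<lambda>N. real (occ w (X N)) / real (length (X N)) * (real (length (X N)) / real N)) \<longlonglongrightarrow> mu w * 1"
    by (rule tendsto_mult[OF A B])
  moreover have "\<forall>\<^sub>F N in sequentially. real (occ w (X N)) / real (length (X N)) * (real (length (X N)) / real N) = real (cnt y w N) / real N"
  proof (rule eventually_sequentiallyI[of 1])
    fix N :: nat assume N: "N \<ge> 1"
    have "length (X N) > 0" unfolding lenX using N lw by linarith
    thus "real (occ w (X N)) / real (length (X N)) * (real (length (X N)) / real N) = real (cnt y w N) / real N"
      unfolding cnt_occ[OF w N] X_def by simp
  qed
  ultimately show ?thesis using Lim_transform_eventually by fastforce
qed


definition words :: "nat \<Rightarrow> bool list set" where "words L = {w. length w = L}"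

lemma words_finite: "finite (words L)"
proof -
  have "words L = {xs. set xs \<subseteq> UNIV \<and> length xs = L}" unfolding words_def by simp
  thus ?thesis using finite_lists_length_eq[of "UNIV :: bool set" L] by simp
qed

lemma agree_map: "agree y L i j \<longleftrightarrow> map y [i..<i+L] = map y [j..<j+L]"
proof
  assume "agree y L i j"
  thus "map y [i..<i+L] = map y [j..<j+L]" unfolding agree_def by (intro nth_equalityI) auto
next
  assume A: "map y [i..<i+L] = map y [j..<j+L]"
  show "agree y L i j" unfolding agree_def
  proof (intro allI impI)
    fix s assume "s < L"
    hence "map y [i..<i+L] ! s = y (i+s)" "map y [j..<j+L] ! s = y (j+s)" by auto
    thus "y (i+s) = y (j+s)" using A by simp
  qed
qed

definition Sw :: "(nat \<Rightarrow> bool) \<Rightarrow> bool list \<Rightarrow> nat \<Rightarrow> nat set" where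
  "Sw y w N = {i. i < N \<and> map y [i..<i + length w] = w}"

lemma Sw_finite: "finite (Sw y w N)" unfolding Sw_def by auto

lemma P_sum: "P y L N = (\<Sum>w\<in>words L. (cnt y w N)^2)"
proof -
  have e: "{(i,j). i < N \<and> j < N \<and> agree y L i j} = (\<Union>w\<in>words L. Sw y w N \<times> Sw y w N)"
    unfolding agree_map Sw_def words_def by auto
  have "card (\<Union>w\<in>words L. Sw y w N \<times> Sw y w N) = (\<Sum>w\<in>words L. card (Sw y w N \<times> Sw y w N))"
    by (rule card_UN_disjoint[OF words_finite]) (auto simp: Sw_finite Sw_def words_def)
  also have "\<dots> = (\<Sum>w\<in>words L. (cnt y w N)^2)"
    unfolding card_cartesian_product cnt_def Sw_def by (simp add: power2_eq_square)
  finally show ?thesis unfolding P_def e .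
qed

lemma cnt_sum: "(\<Sum>w\<in>words L. cnt y w N) = N"
proof -
  have e: "{..<N} = (\<Union>w\<in>words L. Sw y w N)" unfolding Sw_def words_def by auto
  have "card (\<Union>w\<in>words L. Sw y w N) = (\<Sum>w\<in>words L. card (Sw y w N))"
    by (rule card_UN_disjoint[OF words_finite]) (auto simp: Sw_finite Sw_def words_def)
  thus ?thesis unfolding cnt_def Sw_def[symmetric] by (metis e card_lessThan)
qed

definition Dd :: "nat \<Rightarrow> real" where "Dd L = (\<Sum>w\<in>words L. (mu w)^2)"

lemma words_ne: "L \<ge> 1 \<Longrightarrow> w \<in> words L \<Longrightarrow> w \<noteq> []"
  unfolding words_def by auto

lemma P_lim:
  assumes y: "y \<in> subshift \<zeta>" and L: "L \<ge> 1"
  shows "(\<lambda>N. real (P y L N) / real N ^ 2) \<longlonglongrightarrow> Dd L"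
proof -
  have "(\<lambda>N. \<Sum>w\<in>words L. (real (cnt y w N) / real N)^2) \<longlonglongrightarrow> (\<Sum>w\<in>words L. (mu w)^2)"
    by (intro tendsto_sum tendsto_power freq_seq[OF y] words_ne[OF L])
  moreover have "(\<Sum>w\<in>words L. (real (cnt y w N) / real N)^2) = real (P y L N) / real N ^ 2" for N
    unfolding P_sum by (simp add: power_divide sum_divide_distrib)
  ultimately show ?thesis unfolding Dd_def by simp
qed

lemma mu_sum:
  assumes y: "y \<in> subshift \<zeta>" and L: "L \<ge> 1"
  shows "(\<Sum>w\<in>words L. mu w) = 1"
proof -
  have "(\<lambda>N. \<Sum>w\<in>words L. real (cnt y w N) / real N) \<longlonglongrightarrow> (\<Sum>w\<in>words L. mu w)"
    by (intro tendsto_sum freq_seq[OF y] words_ne[OF L])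
  moreover have "\<forall>\<^sub>F N in sequentially. (\<Sum>w\<in>words L. real (cnt y w N) / real N) = 1"
  proof (rule eventually_sequentiallyI[of 1])
    fix N :: nat assume "N \<ge> 1"
    have "(\<Sum>w\<in>words L. real (cnt y w N) / real N) = real (\<Sum>w\<in>words L. cnt y w N) / real N"
      by (simp add: sum_divide_distrib)
    thus "(\<Sum>w\<in>words L. real (cnt y w N) / real N) = 1" using \<open>N \<ge> 1\<close> unfolding cnt_sum by simp
  qed
  hence "(\<lambda>N. \<Sum>w\<in>words L. real (cnt y w N) / real N) \<longlonglongrightarrow> 1"
    by (rule tendsto_eventually)
  ultimately show ?thesis using LIMSEQ_unique by blast
qed

lemma Dd_pos:
  assumes y: "y \<in> subshift \<zeta>" and L: "L \<ge> 1"
  shows "Dd L > 0"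
proof -
  obtain w where w: "w \<in> words L" "mu w > 0"
  proof (rule ccontr)
    assume "\<not> thesis"
    hence "\<forall>w\<in>words L. mu w \<le> 0" using that by force
    hence "(\<Sum>w\<in>words L. mu w) \<le> 0" by (simp add: sum_nonpos)
    thus False using mu_sum[OF y L] by simp
  qed
  have "(mu w)^2 \<le> Dd L" unfolding Dd_def using w(1) words_finite
    by (intro member_le_sum) auto
  moreover have "(mu w)^2 > 0" using w by simp
  ultimately show ?thesis by linarith
qed


end

definition ExSet :: "(nat \<Rightarrow> 'a) \<Rightarrow> nat \<Rightarrow> nat \<Rightarrow> (nat \<times> nat) set" where
  "ExSet y L N = {(i,j). i < N \<and> j < N \<and> agree y L i j \<and> \<not> agree y (Suc L) i j}"

lemma agree_Suc_sub: "agree y (Suc L) i j \<Longrightarrow> agree y L i j"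
  unfolding agree_def by auto

lemma agree_mono: "L \<le> L' \<Longrightarrow> agree y L' i j \<Longrightarrow> agree y L i j"
  unfolding agree_def by auto

lemma P_finite: "finite {(i,j). i < N \<and> j < N \<and> agree y L i j}"
  by (rule finite_subset[of _ "{..<N} \<times> {..<N}"]) auto

lemma card_diff_agree:
  assumes "L \<le> L'"
  shows "real (card {(i,j). i < N \<and> j < N \<and> agree y L i j \<and> \<not> agree y L' i j}) = real (P y L N) - real (P y L' N)"
proof -
  have e: "{(i,j). i < N \<and> j < N \<and> agree y L i j \<and> \<not> agree y L' i j} =
      {(i,j). i < N \<and> j < N \<and> agree y L i j} - {(i,j). i < N \<and> j < N \<and> agree y L' i j}"
    using agree_mono[OF assms] by auto
  have sub: "{(i,j). i < N \<and> j < N \<and> agree y L' i j} \<subseteq> {(i,j). i < N \<and> j < N \<and> agree y L i j}"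
    using agree_mono[OF assms] by auto
  have "card ({(i,j). i < N \<and> j < N \<and> agree y L i j} - {(i,j). i < N \<and> j < N \<and> agree y L' i j}) =
     P y L N - P y L' N" unfolding P_def by (rule card_Diff_subset[OF P_finite sub])
  moreover have "P y L' N \<le> P y L N" unfolding P_def by (rule card_mono[OF P_finite sub])
  ultimately show ?thesis unfolding e by (simp add: of_nat_diff)
qed

lemma card_Ex: "real (card (ExSet y L N)) = real (P y L N) - real (P y (Suc L) N)"
  unfolding ExSet_def by (rule card_diff_agree) simp

lemma Ex_shift: "card (ExSet y (Suc k) N) \<le> card (ExSet y k (Suc N))"
proof -
  have "(\<lambda>(i,j). (Suc i, Suc j)) ` ExSet y (Suc k) N \<subseteq> ExSet y k (Suc N)"
  proof
    fix p assume "p \<in> (\<lambda>(i,j). (Suc i, Suc j)) ` ExSet y (Suc k) N"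
    then obtain i j where p: "p = (Suc i, Suc j)" and ij: "(i,j) \<in> ExSet y (Suc k) N" by auto
    have a: "agree y (Suc k) i j" and na: "\<not> agree y (Suc (Suc k)) i j" and ij2: "i < N" "j < N"
      using ij unfolding ExSet_def by auto
    have "y (i + Suc k) \<noteq> y (j + Suc k)" using a na unfolding agree_def by (metis less_Suc_eq)
    hence "\<not> agree y (Suc k) (Suc i) (Suc j)" unfolding agree_def by auto
    moreover have "agree y k (Suc i) (Suc j)" using a unfolding agree_def by auto
    ultimately show "p \<in> ExSet y k (Suc N)" using p ij2 unfolding ExSet_def by auto
  qed
  moreover have "finite (ExSet y k (Suc N))" unfolding ExSet_def
    by (rule finite_subset[of _ "{..<Suc N} \<times> {..<Suc N}"]) auto
  ultimately have "card ((\<lambda>(i,j). (Suc i, Suc j)) ` ExSet y (Suc k) N) \<le> card (ExSet y k (Suc N))"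
    by (rule card_mono[rotated])
  moreover have "card ((\<lambda>(i,j). (Suc i, Suc j)) ` ExSet y (Suc k) N) = card (ExSet y (Suc k) N)"
    by (rule card_image) (auto simp: inj_on_def)
  ultimately show ?thesis by simp
qed

context csubst begin

lemma E_mono:
  assumes y: "y \<in> subshift \<zeta>" and k: "k \<ge> 1"
  shows "Dd (Suc k) - Dd (Suc (Suc k)) \<le> Dd k - Dd (Suc k)"
proof -
  define a where "a = (\<lambda>N. real (card (ExSet y (Suc k) N)))"
  define b where "b = (\<lambda>N. real (card (ExSet y k N)))"
  have la: "(\<lambda>N. a N / real N ^ 2) \<longlonglongrightarrow> Dd (Suc k) - Dd (Suc (Suc k))"
    unfolding a_def card_Ex diff_divide_distrib using k by (intro tendsto_diff P_lim[OF y]) auto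
  have lb: "(\<lambda>N. b N / real N ^ 2) \<longlonglongrightarrow> Dd k - Dd (Suc k)"
    unfolding b_def card_Ex diff_divide_distrib using k by (intro tendsto_diff P_lim[OF y]) auto
  have lb': "(\<lambda>N. b (Suc N) / real (Suc N) ^ 2) \<longlonglongrightarrow> Dd k - Dd (Suc k)"
    using LIMSEQ_Suc[OF lb] by simp
  have r: "(\<lambda>N::nat. (real N / real (Suc N))^2) \<longlonglongrightarrow> 1" by real_asymp
  have la': "(\<lambda>N. a N / real N ^ 2 * (real N / real (Suc N))^2) \<longlonglongrightarrow> (Dd (Suc k) - Dd (Suc (Suc k))) * 1"
    by (rule tendsto_mult[OF la r])
  have eq: "\<forall>\<^sub>F N in sequentially. a N / real N ^ 2 * (real N / real (Suc N))^2 = a N / real (Suc N) ^ 2"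
    by (rule eventually_sequentiallyI[of 1]) (simp add: power_divide)
  have la'': "(\<lambda>N. a N / real (Suc N) ^ 2) \<longlonglongrightarrow> Dd (Suc k) - Dd (Suc (Suc k))"
    using Lim_transform_eventually[OF la' eq] by simp
  have le: "a N / real (Suc N) ^ 2 \<le> b (Suc N) / real (Suc N) ^ 2" for N
    unfolding a_def b_def using Ex_shift[of y k N] by (intro divide_right_mono) auto
  show ?thesis by (rule LIMSEQ_le[OF la'' lb']) (use le in auto)
qed

end



locale csubst_inj = csubst +
  assumes zinj: "\<zeta> False \<noteq> \<zeta> True"
begin

definition zimg :: "(nat \<Rightarrow> bool) \<Rightarrow> nat \<Rightarrow> bool" where
  "zimg y p = \<zeta> (y (p div q)) ! (p mod q)"

lemma qpos_nat: "q > 0" using q2 by simp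

lemma sw_nth: "i < length x \<Longrightarrow> r < q \<Longrightarrow> sw x ! (q*i + r) = \<zeta> (x!i) ! r"
proof (induction x arbitrary: i)
  case Nil then show ?case by simp
next
  case (Cons c x)
  have sc: "sw (c # x) = \<zeta> c @ sw x" unfolding subst_word_def by simp
  show ?case
  proof (cases i)
    case 0 then show ?thesis using Cons.prems sc by (simp add: nth_append lz)
  next
    case (Suc i')
    have "sw (c # x) ! (q*i + r) = sw x ! (q*i' + r)" unfolding sc using Suc by (simp add: nth_append lz)
    also have "\<dots> = \<zeta> (x!i') ! r" using Cons Suc by simp
    finally show ?thesis using Suc by simp
  qed
qed

lemma zimg_shift: "zimg y (q*i + p) = \<zeta> (y (i + p div q)) ! (p mod q)"
  unfolding zimg_def using qpos_nat by simp

lemma zimg_prefix: "map (zimg y) [0..<n] = take n (sw (map y [0..<n]))"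
proof (rule nth_equalityI)
  show "length (map (zimg y) [0..<n]) = length (take n (sw (map y [0..<n])))"
    using q2 by (simp add: length_sw)
next
  fix p assume "p < length (map (zimg y) [0..<n])"
  hence p: "p < n" by simp
  have pd: "p div q < n" using p by (meson div_le_dividend le_less_trans)
  have pe: "p = q * (p div q) + p mod q" by simp
  have "take n (sw (map y [0..<n])) ! p = sw (map y [0..<n]) ! (q * (p div q) + p mod q)"
    using p by (simp flip: pe)
  also have "\<dots> = \<zeta> (map y [0..<n] ! (p div q)) ! (p mod q)"
    by (rule sw_nth) (use pd qpos_nat in auto)
  also have "\<dots> = \<zeta> (y (p div q)) ! (p mod q)" using pd by simp
  finally show "map (zimg y) [0..<n] ! p = take n (sw (map y [0..<n])) ! p"
    using p unfolding zimg_def by simp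
qed

lemma zimg_sub: assumes "y \<in> subshift \<zeta>" shows "zimg y \<in> subshift \<zeta>"
  unfolding subshift_def
proof (intro CollectI allI)
  fix n
  have "map y [0..<n] \<in> subst_language \<zeta>" using assms unfolding subshift_def by auto
  hence "take n (sw (map y [0..<n])) \<in> subst_language \<zeta>" by (intro take_lang sw_lang)
  thus "map (zimg y) [0..<n] \<in> subst_language \<zeta>" unfolding zimg_prefix .
qed

lemma count_D3:
  assumes L: "L \<ge> 1"
  shows "q * card (ExSet y L N) \<le> card {(i,j). i < q*N \<and> j < q*N \<and> agree (zimg y) (q*L - q + 1) i j \<and> \<not> agree (zimg y) (q*L + q) i j}"
proof -
  let ?Z = "{(i,j). i < q*N \<and> j < q*N \<and> agree (zimg y) (q*L - q + 1) i j \<and> \<not> agree (zimg y) (q*L + q) i j}"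
  let ?g = "\<lambda>((i,j),r). (q*i + r, q*j + r)"
  have sub: "?g ` (ExSet y L N \<times> {..<q}) \<subseteq> ?Z"
  proof
    fix z assume "z \<in> ?g ` (ExSet y L N \<times> {..<q})"
    then obtain i j r where z: "z = (q*i + r, q*j + r)" and ij: "(i,j) \<in> ExSet y L N" and r: "r < q" by auto
    have i: "i < N" "j < N" and a: "agree y L i j" and na: "\<not> agree y (Suc L) i j"
      using ij unfolding ExSet_def by auto
    have b1: "q*i + r < q*N" "q*j + r < q*N"
    proof -
      have "q*i + r < q*(i+1)" using r by simp
      also have "\<dots> \<le> q*N" using i by (intro mult_le_mono2) auto
      finally show "q*i + r < q*N" .
      have "q*j + r < q*(j+1)" using r by simp
      also have "\<dots> \<le> q*N" using i by (intro mult_le_mono2) auto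
      finally show "q*j + r < q*N" .
    qed
    have ag: "agree (zimg y) (q*L - q + 1) (q*i + r) (q*j + r)" unfolding agree_def
    proof (intro allI impI)
      fix s assume s: "s < q*L - q + 1"
      have "r + s < q * L" using s r L by (cases L) auto
      hence lt: "(r + s) div q < L" using qpos_nat by (simp add: div_less_iff_less_mult mult.commute)
      have "zimg y (q*i + r + s) = \<zeta> (y (i + (r+s) div q)) ! ((r+s) mod q)"
        using zimg_shift[of y i "r+s"] by (simp add: add.assoc)
      moreover have "zimg y (q*j + r + s) = \<zeta> (y (j + (r+s) div q)) ! ((r+s) mod q)"
        using zimg_shift[of y j "r+s"] by (simp add: add.assoc)
      moreover have "y (i + (r+s) div q) = y (j + (r+s) div q)" using a lt unfolding agree_def by auto
      ultimately show "zimg y (q*i + r + s) = zimg y (q*j + r + s)" by simp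
    qed
    have "y (i + L) \<noteq> y (j + L)" using a na unfolding agree_def by (metis less_Suc_eq)
    hence zd: "\<zeta> (y (i + L)) \<noteq> \<zeta> (y (j + L))" using zinj by (cases "y (i+L)"; cases "y (j+L)") auto
    obtain u where u: "u < q" "\<zeta> (y (i + L)) ! u \<noteq> \<zeta> (y (j + L)) ! u"
    proof (rule ccontr)
      assume "\<not> thesis"
      hence "\<forall>u<q. \<zeta> (y (i + L)) ! u = \<zeta> (y (j + L)) ! u" using that by blast
      hence "\<zeta> (y (i + L)) = \<zeta> (y (j + L))" by (intro nth_equalityI) (auto simp: lz)
      thus False using zd by simp
    qed
    have nag: "\<not> agree (zimg y) (q*L + q) (q*i + r) (q*j + r)"
    proof
      assume A: "agree (zimg y) (q*L + q) (q*i + r) (q*j + r)"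
      define s where "s = q*L + u - r"
      have rl: "r \<le> q * L" using r L by (metis le_trans less_imp_le_nat mult.right_neutral mult_le_mono2)
      have s: "s < q*L + q" unfolding s_def using u r by linarith
      have e1: "q*i + r + s = q*(i + L) + u" unfolding s_def using rl by (simp add: algebra_simps)
      have e2: "q*j + r + s = q*(j + L) + u" unfolding s_def using rl by (simp add: algebra_simps)
      have "zimg y (q*(i+L) + u) = zimg y (q*(j+L) + u)"
        using A s unfolding agree_def e1[symmetric] e2[symmetric] by (metis add.assoc)
      thus False using u unfolding zimg_def using qpos_nat by simp
    qed
    show "z \<in> ?Z" using z b1 ag nag by simp
  qed
  have inj: "inj_on ?g (ExSet y L N \<times> {..<q})"
  proof (rule inj_onI)
    fix x1 x2 assume x1: "x1 \<in> ExSet y L N \<times> {..<q}" and x2: "x2 \<in> ExSet y L N \<times> {..<q}" and eq: "?g x1 = ?g x2"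
    obtain i1 j1 r1 where 1: "x1 = ((i1,j1),r1)" "r1 < q" using x1 by auto
    obtain i2 j2 r2 where 2: "x2 = ((i2,j2),r2)" "r2 < q" using x2 by auto
    have e: "q*i1 + r1 = q*i2 + r2" "q*j1 + r1 = q*j2 + r2" using eq 1 2 by auto
    have "r1 = r2" using arg_cong[OF e(1), of "\<lambda>x. x mod q"] 1 2 by simp
    moreover have "i1 = i2" using arg_cong[OF e(1), of "\<lambda>x. x div q"] 1 2 qpos_nat by simp
    moreover have "j1 = j2" using arg_cong[OF e(2), of "\<lambda>x. x div q"] 1 2 qpos_nat by simp
    ultimately show "x1 = x2" using 1 2 by simp
  qed
  have fZ: "finite ?Z" by (rule finite_subset[of _ "{..<q*N} \<times> {..<q*N}"]) auto
  have "card (ExSet y L N \<times> {..<q}) \<le> card ?Z"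
    using card_image[OF inj] card_mono[OF fZ sub] by simp
  thus ?thesis by (simp add: card_cartesian_product mult.commute)
qed


lemma E_scale:
  assumes y: "y \<in> subshift \<zeta>" and L: "L \<ge> 1"
  shows "Dd L - Dd (Suc L) \<le> real q * (Dd (q*L - q + 1) - Dd (q*L + q))"
proof -
  define z where "z = zimg y"
  have z: "z \<in> subshift \<zeta>" unfolding z_def by (rule zimg_sub[OF y])
  define a where "a = q*L - q + 1"
  define b where "b = q*L + q"
  have qq: "q*L - q \<le> q*L" by simp
  have ab: "a \<le> b" "a \<ge> 1" "b \<ge> 1" unfolding a_def b_def using qq qpos_nat by linarith+
  define c where "c = (\<lambda>N. real (card (ExSet y L N)))"
  define d where "d = (\<lambda>M. real (card {(i,j). i < M \<and> j < M \<and> agree z a i j \<and> \<not> agree z b i j}))"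
  have lc: "(\<lambda>N. c N / real N ^ 2) \<longlonglongrightarrow> Dd L - Dd (Suc L)"
    unfolding c_def card_Ex diff_divide_distrib using L by (intro tendsto_diff P_lim[OF y]) auto
  have ld: "(\<lambda>M. d M / real M ^ 2) \<longlonglongrightarrow> Dd a - Dd b"
    unfolding d_def card_diff_agree[OF ab(1)] diff_divide_distrib using ab by (intro tendsto_diff P_lim[OF z]) auto
  have sm: "strict_mono (\<lambda>N. q * N)" using qpos_nat by (simp add: strict_mono_def)
  have ld': "(\<lambda>N. d (q*N) / real (q*N) ^ 2) \<longlonglongrightarrow> Dd a - Dd b"
    using LIMSEQ_subseq_LIMSEQ[OF ld sm] by (simp add: comp_def)
  have lc': "(\<lambda>N. (c N / real N ^ 2) / real q) \<longlonglongrightarrow> (Dd L - Dd (Suc L)) / real q"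
    by (intro tendsto_divide lc tendsto_const) (use qpos in auto)
  have le: "(c N / real N ^ 2) / real q \<le> d (q*N) / real (q*N) ^ 2" for N
  proof (cases "N = 0")
    case True then show ?thesis by (simp add: d_def)
  next
    case False
    have "real q * c N \<le> d (q*N)"
    proof -
      have "real (q * card (ExSet y L N)) \<le> d (q*N)" unfolding d_def z_def a_def b_def
        using count_D3[OF L, of y N] by (simp only: of_nat_le_iff)
      thus ?thesis unfolding c_def by simp
    qed
    hence "real q * c N / real (q*N) ^ 2 \<le> d (q*N) / real (q*N) ^ 2" by (intro divide_right_mono) auto
    moreover have "real q * c N / real (q*N) ^ 2 = (c N / real N ^ 2) / real q"
      using qpos False by (simp add: power_mult_distrib field_simps power2_eq_square)
    ultimately show ?thesis by simp
  qed
  have "(Dd L - Dd (Suc L)) / real q \<le> Dd a - Dd b" by (rule LIMSEQ_le[OF lc' ld']) (use le in auto)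
  thus ?thesis unfolding a_def b_def using qpos by (simp add: field_simps)
qed

lemma Dd_anti:
  assumes y: "y \<in> subshift \<zeta>" and L: "L \<ge> 1"
  shows "Dd (Suc L) \<le> Dd L"
proof -
  have lc: "(\<lambda>N. real (card (ExSet y L N)) / real N ^ 2) \<longlonglongrightarrow> Dd L - Dd (Suc L)"
    unfolding card_Ex diff_divide_distrib using L by (intro tendsto_diff P_lim[OF y]) auto
  have "0 \<le> Dd L - Dd (Suc L)" by (rule LIMSEQ_le_const[OF lc]) auto
  thus ?thesis by simp
qed

end



lemma E_bound:
  fixes D :: "nat \<Rightarrow> real" and q :: nat
  assumes q: "q \<ge> 2" and pos: "\<And>L. L \<ge> 1 \<Longrightarrow> D L > 0"
    and anti: "\<And>L. L \<ge> 1 \<Longrightarrow> D (Suc L) \<le> D L"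
    and mono: "\<And>k. k \<ge> 1 \<Longrightarrow> D (Suc k) - D (Suc (Suc k)) \<le> D k - D (Suc k)"
    and sc: "\<And>L. L \<ge> 1 \<Longrightarrow> D L - D (Suc L) \<le> real q * (D (q*L - q + 1) - D (q*L + q))"
    and L: "L \<ge> 2"
  shows "D L - D (Suc L) \<le> real q * (2 * real q - 1) * D L / (real L - 1)"
proof -
  define E where "E = (\<lambda>k. D k - D (Suc k))"
  have E0: "k \<ge> 1 \<Longrightarrow> E k \<ge> 0" for k unfolding E_def using anti by simp
  have Ea: "i \<ge> 1 \<Longrightarrow> E (i + n) \<le> E i" for i n
  proof (induction n)
    case 0 then show ?case by simp
  next
    case (Suc n) then show ?case using mono[of "i+n"] unfolding E_def by simp
  qed
  have up: "i \<ge> 1 \<Longrightarrow> D i - D (i + n) \<le> real n * E i" for i n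
  proof (induction n)
    case 0 then show ?case by simp
  next
    case (Suc n)
    have "D i - D (i + Suc n) = (D i - D (i + n)) + E (i + n)" unfolding E_def by simp
    also have "\<dots> \<le> real n * E i + E i" using Suc Ea[OF Suc.prems, of n] by linarith
    finally show ?case by (simp add: algebra_simps)
  qed
  have lo: "i \<ge> 1 \<Longrightarrow> real n * E (i + n) \<le> D i - D (i + n)" for i n
  proof (induction n)
    case 0 then show ?case by simp
  next
    case (Suc n)
    have "E (i + Suc n) \<le> E (i + n)" using Ea[of "i+n" 1] Suc.prems by simp
    hence "real n * E (i + Suc n) \<le> real n * E (i + n)" by (intro mult_left_mono) auto
    moreover have "D i - D (i + Suc n) = (D i - D (i + n)) + E (i + n)" unfolding E_def by simp
    moreover note Suc.IH[OF Suc.prems] \<open>E (i + Suc n) \<le> E (i + n)\<close>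
    ultimately show ?case by (simp add: algebra_simps)
  qed
  define a where "a = q*L - q + 1"
  have L1: "L \<ge> 1" using L by simp
  have aL: "a = L + (q - 1) * (L - 1)"
  proof -
    obtain q' where q': "q = Suc q'" using q by (cases q) auto
    obtain L' where L': "L = Suc L'" using L by (cases L) auto
    note qL = q' L'
    show ?thesis unfolding a_def qL by (simp add: algebra_simps)
  qed
  have a1: "a \<ge> 1" unfolding aL using L by simp
  have ab: "q*L + q = a + (2*q - 1)" unfolding a_def using q L
  proof -
    have "q \<le> q * L" using L by simp
    thus "q * L + q = q * L - q + 1 + (2 * q - 1)" using q by linarith
  qed
  have s1: "E L \<le> real q * (D a - D (a + (2*q - 1)))" using sc[OF L1] unfolding E_def a_def[symmetric] ab by simp
  have s2: "D a - D (a + (2*q - 1)) \<le> real (2*q - 1) * E a" by (rule up[OF a1])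
  have r2: "real (2*q - 1) = 2 * real q - 1" using q by (simp add: of_nat_diff)
  have s3': "real q * (D a - D (a + (2*q - 1))) \<le> real q * (real (2*q - 1) * E a)"
    by (rule mult_left_mono[OF s2]) simp
  have s3: "E L \<le> real q * (2 * real q - 1) * E a"
    using s1 s3' unfolding r2 by (simp add: mult.assoc)
  have s4: "real ((q - 1) * (L - 1)) * E a \<le> D L - D a"
    using lo[OF L1, of "(q - 1) * (L - 1)"] unfolding aL by simp
  have s5: "real (L - 1) \<le> real ((q - 1) * (L - 1))"
  proof -
    have "L - 1 \<le> (q - 1) * (L - 1)" using q by (simp add: Suc_le_eq)
    thus ?thesis by (simp only: of_nat_le_iff)
  qed
  have Ea0: "E a \<ge> 0" using E0[OF a1] .
  have s6: "real (L - 1) * E a \<le> D L"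
    using mult_right_mono[OF s5 Ea0] s4 pos[OF a1] by linarith
  have Lr: "real L - 1 > 0" "real (L - 1) = real L - 1" using L by (auto simp: of_nat_diff)
  have s7: "E a \<le> D L / (real L - 1)" using s6 Lr by (simp add: field_simps mult.commute)
  have "E L \<le> real q * (2 * real q - 1) * (D L / (real L - 1))"
    using s3 mult_left_mono[OF s7, of "real q * (2 * real q - 1)"] q by simp
  thus ?thesis unfolding E_def by simp
qed

lemma ratio_bound:
  fixes D :: "nat \<Rightarrow> real" and K :: real and l :: nat
  assumes pos: "D L > 0" and e1: "0 \<le> D (Suc L) - D (Suc (Suc L))"
    and e2: "D (Suc L) - D (Suc (Suc L)) \<le> D L - D (Suc L)"
    and K: "D L - D (Suc L) \<le> K * D L" and l: "l \<ge> 1"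
  shows "\<bar>(real (l+1) * D (Suc L) - real l * D (Suc (Suc L))) / (real l * D L - (real l - 1) * D (Suc L)) - 1\<bar> \<le> real l * K"
proof -
  define E0 where "E0 = D L - D (Suc L)"
  define E1 where "E1 = D (Suc L) - D (Suc (Suc L))"
  define R0 where "R0 = real l * D L - (real l - 1) * D (Suc L)"
  have R0: "R0 = D L + (real l - 1) * E0" unfolding R0_def E0_def by (simp add: algebra_simps)
  have E00: "E0 \<ge> 0" using e1 e2 unfolding E0_def by linarith
  have lr: "real l - 1 \<ge> 0" using l by simp
  have R0D: "R0 \<ge> D L" unfolding R0 using E00 lr by simp
  have R0p: "R0 > 0" using R0D pos by linarith
  have num: "real (l+1) * D (Suc L) - real l * D (Suc (Suc L)) = R0 + real l * (E1 - E0)"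
    unfolding R0_def E0_def E1_def by (simp add: algebra_simps)
  have "(real (l+1) * D (Suc L) - real l * D (Suc (Suc L))) / R0 - 1 = real l * (E1 - E0) / R0"
    unfolding num using R0p by (simp add: field_simps)
  moreover have "\<bar>real l * (E1 - E0) / R0\<bar> = real l * (E0 - E1) / R0"
    using e1 e2 R0p unfolding E0_def E1_def by (simp add: abs_div_pos abs_mult)
  moreover have "real l * (E0 - E1) / R0 \<le> real l * E0 / D L"
  proof -
    have "real l * (E0 - E1) \<le> real l * E0" using e1 unfolding E1_def by (simp add: mult_left_mono)
    hence "real l * (E0 - E1) / R0 \<le> real l * E0 / R0" using R0p by (simp add: divide_right_mono)
    also have "\<dots> \<le> real l * E0 / D L" using R0D pos E00 by (intro divide_left_mono) auto
    finally show ?thesis .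
  qed
  moreover have "real l * E0 / D L \<le> real l * K"
  proof -
    have "E0 / D L \<le> K" using K pos unfolding E0_def by (simp add: divide_le_eq)
    thus ?thesis using l by (metis mult_left_mono of_nat_0_le_iff times_divide_eq_right)
  qed
  ultimately show ?thesis unfolding R0_def by linarith
qed




lemma concat_rep_nth:
  assumes "length c = q" "i < m * q"
  shows "concat (replicate m c) ! i = c ! (i mod q)"
  using assms
proof (induction m arbitrary: i)
  case 0 then show ?case by simp
next
  case (Suc m)
  show ?case
  proof (cases "i < q")
    case True then show ?thesis using Suc.prems by (simp add: nth_append)
  next
    case False
    hence "concat (replicate (Suc m) c) ! i = concat (replicate m c) ! (i - q)"
      using Suc.prems by (simp add: nth_append)
    also have "\<dots> = c ! ((i - q) mod q)" using Suc False by (intro Suc.IH) auto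
    also have "(i - q) mod q = i mod q" using False by (simp add: le_mod_geq)
    finally show ?thesis .
  qed
qed

lemma aper_inj:
  assumes cl: "const_length_subst \<zeta> q" and ap: "aperiodic_subst \<zeta>"
  shows "\<zeta> False \<noteq> \<zeta> True"
proof
  assume eq: "\<zeta> False = \<zeta> True"
  define c where "c = \<zeta> False"
  have zc: "\<zeta> b = c" for b unfolding c_def using eq by (cases b) auto
  have q: "q \<ge> 2" "length c = q" using cl unfolding const_length_subst_def c_def by auto
  have swc: "subst_word \<zeta> x = concat (replicate (length x) c)" for x
    unfolding subst_word_def zc by (induction x) auto
  obtain y0 where y0: "y0 \<in> subshift \<zeta>" "\<not> shift_periodic y0" using ap unfolding aperiodic_subst_def by blast
  have per: "y0 (i + q) = y0 i" for i
  proof -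
    define n where "n = i + q + 1"
    have "map y0 [0..<n] \<in> subst_language \<zeta>" using y0(1) unfolding subshift_def by auto
    then obtain k a u v where U: "(subst_word \<zeta> ^^ k) [a] = u @ map y0 [0..<n] @ v"
      unfolding subst_language_def by blast
    show ?thesis
    proof (cases k)
      case 0
      hence "length (u @ map y0 [0..<n] @ v) = 1" using U[symmetric] by simp
      thus ?thesis unfolding n_def using q by simp
    next
      case (Suc k')
      define W where "W = (subst_word \<zeta> ^^ k) [a]"
      have W: "W = concat (replicate (length ((subst_word \<zeta> ^^ k') [a])) c)"
        unfolding W_def Suc by (simp add: swc)
      define m where "m = length ((subst_word \<zeta> ^^ k') [a])"
      have lW: "length W = m * q" unfolding W m_def using q by (simp add: length_concat sum_list_replicate)
      have Wu: "W = u @ map y0 [0..<n] @ v" unfolding W_def by (rule U)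
      have b: "length u + i + q < m * q" using arg_cong[OF Wu, of length] lW unfolding n_def by simp
      have "y0 i = W ! (length u + i)" unfolding Wu n_def by (simp add: nth_append)
      also have "\<dots> = c ! ((length u + i) mod q)" unfolding W m_def[symmetric] using q b by (intro concat_rep_nth) auto
      also have "\<dots> = c ! ((length u + i + q) mod q)" by simp
      also have "\<dots> = W ! (length u + i + q)" unfolding W m_def[symmetric] using q b by (intro concat_rep_nth[symmetric]) auto
      also have "\<dots> = y0 (i + q)" unfolding Wu n_def by (simp add: nth_append)
      finally show ?thesis by simp
    qed
  qed
  have "shift q y0 = y0" unfolding shift_def using per by auto
  moreover have "q > 0" using q by simp
  ultimately have "shift_periodic y0" unfolding shift_periodic_def by blast
  thus False using y0(2) by simp
qed


context csubst begin

lemma W_lim: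
  assumes y: "y \<in> subshift \<zeta>" and L: "L \<ge> 1"
  shows "(\<lambda>n. (real (P y L (Suc n - l)) - real (Suc n - l)) / (real n ^ 2 - real n)) \<longlonglongrightarrow> Dd L"
proof -
  define g where "g = (\<lambda>N. real (P y L N) / real N ^ 2)"
  have gl: "g \<longlonglongrightarrow> Dd L" unfolding g_def by (rule P_lim[OF y L])
  have fl: "filterlim (\<lambda>n. Suc n - l) sequentially sequentially"
    using filterlim_compose[OF filterlim_minus_const_nat_at_top filterlim_Suc, of l] by (simp add: comp_def)
  have g2: "(\<lambda>n. g (Suc n - l)) \<longlonglongrightarrow> Dd L" using filterlim_compose[OF gl fl] by simp
  have r1: "(\<lambda>n::nat. (real n + 1 - real l)^2 / (real n ^ 2 - real n)) \<longlonglongrightarrow> 1" by real_asymp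
  have r2: "(\<lambda>n::nat. (real n + 1 - real l) / (real n ^ 2 - real n)) \<longlonglongrightarrow> 0" by real_asymp
  have lim: "(\<lambda>n. g (Suc n - l) * ((real n + 1 - real l)^2 / (real n ^ 2 - real n)) - (real n + 1 - real l) / (real n ^ 2 - real n))
      \<longlonglongrightarrow> Dd L * 1 - 0"
    by (intro tendsto_diff tendsto_mult g2 r1 r2)
  have ev: "\<forall>\<^sub>F n in sequentially. g (Suc n - l) * ((real n + 1 - real l)^2 / (real n ^ 2 - real n)) - (real n + 1 - real l) / (real n ^ 2 - real n)
     = (real (P y L (Suc n - l)) - real (Suc n - l)) / (real n ^ 2 - real n)"
  proof (rule eventually_sequentiallyI[of "l + 2"])
    fix n assume n: "n \<ge> l + 2"
    have e: "real (Suc n - l) = real n + 1 - real l" using n by (simp add: of_nat_diff)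
    have nz: "real n + 1 - real l \<noteq> 0" using n by simp
    show "g (Suc n - l) * ((real n + 1 - real l)^2 / (real n ^ 2 - real n)) - (real n + 1 - real l) / (real n ^ 2 - real n)
     = (real (P y L (Suc n - l)) - real (Suc n - l)) / (real n ^ 2 - real n)"
      unfolding g_def e using nz by (simp add: field_simps add_divide_distrib diff_divide_distrib)
  qed
  show ?thesis using Lim_transform_eventually[OF lim ev] by simp
qed

lemma RR_lim:
  assumes y: "y \<in> subshift \<zeta>" and h: "h \<ge> 1" and m: "m \<ge> 1" and l: "l \<ge> 1"
  shows "(\<lambda>n. RR l (delay_embed m y) n ((1/2)^h)) \<longlonglongrightarrow> real l * Dd (h+m+l-2) - (real l - 1) * Dd (h+m+l-1)"
proof -
  have c1: "real (card (win (delay_embed m y) n ((1/2)^h) l)) = real (P y (h+m+l-2) (Suc n - l)) - real (Suc n - l)" for n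
    by (rule card_win_agree[OF l h m])
  have c2: "real (card (win (delay_embed m y) n ((1/2)^h) (Suc l))) = real (P y (h+m+l-1) (Suc n - Suc l)) - real (Suc n - Suc l)" for n
    using card_win_agree[of "Suc l" h m y n] h m by simp
  have e: "RR l (delay_embed m y) n ((1/2)^h) =
      real l * ((real (P y (h+m+l-2) (Suc n - l)) - real (Suc n - l)) / (real n ^ 2 - real n)) -
      (real l - 1) * ((real (P y (h+m+l-1) (Suc n - Suc l)) - real (Suc n - Suc l)) / (real n ^ 2 - real n))" for n
    unfolding RR_win[OF l] c1 c2 by (simp add: diff_divide_distrib right_diff_distrib)
  show ?thesis unfolding e using h m l
    by (intro tendsto_diff tendsto_mult tendsto_const W_lim[OF y]) auto
qed

end


theorem lemma6p1:
  fixes \<zeta> :: "bool \<Rightarrow> bool list" and q :: nat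
    and y :: "nat \<Rightarrow> bool" and m l :: nat
  assumes "const_length_subst \<zeta> q"
    and "primitive_subst \<zeta>"
    and "aperiodic_subst \<zeta>"
    and "y \<in> subshift \<zeta>"
    and "m \<ge> 1" and "l \<ge> 1"
  shows "(\<lambda>h::nat. RR_inf (l + 1) (delay_embed m y) ((1/2) ^ h)
                  / RR_inf l (delay_embed m y) ((1/2) ^ h)) \<longlonglongrightarrow> 1"
proof -
  interpret csubst \<zeta> q by unfold_locales (fact assms(1), fact assms(2))
  have inj: "\<zeta> False \<noteq> \<zeta> True" by (rule aper_inj[OF assms(1,3)])
  interpret csubst_inj \<zeta> q by unfold_locales (rule inj)
  note y = assms(4) and m = assms(5) and l = assms(6)
  define C where "C = real q * (2 * real q - 1)"
  have EB: "Dd L - Dd (Suc L) \<le> C * Dd L / (real L - 1)" if L: "L \<ge> 2" for L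
    unfolding C_def
  proof (rule E_bound[OF q2])
    show "\<And>L. 1 \<le> L \<Longrightarrow> 0 < Dd L" by (rule Dd_pos[OF y])
    show "\<And>L. 1 \<le> L \<Longrightarrow> Dd (Suc L) \<le> Dd L" by (rule Dd_anti[OF y])
    show "\<And>k. 1 \<le> k \<Longrightarrow> Dd (Suc k) - Dd (Suc (Suc k)) \<le> Dd k - Dd (Suc k)" by (rule E_mono[OF y])
    show "\<And>L. 1 \<le> L \<Longrightarrow> Dd L - Dd (Suc L) \<le> real q * (Dd (q * L - q + 1) - Dd (q * L + q))" by (rule E_scale[OF y])
  qed (rule L)
  define Lh where "Lh = (\<lambda>h::nat. h + m + l - 2)"
  define bnd where "bnd = (\<lambda>h::nat. real l * C / (real h + real m + real l - 3))"
  have bl: "bnd \<longlonglongrightarrow> 0" unfolding bnd_def by real_asymp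
  have key: "\<bar>RR_inf (l + 1) (delay_embed m y) ((1/2) ^ h) / RR_inf l (delay_embed m y) ((1/2) ^ h) - 1\<bar> \<le> bnd h"
    if h: "h \<ge> 2" for h
  proof -
    have h1: "h \<ge> 1" using h by simp
    have L2: "Lh h \<ge> 2" unfolding Lh_def using h m l by simp
    have R0: "RR_inf l (delay_embed m y) ((1/2) ^ h) = real l * Dd (Lh h) - (real l - 1) * Dd (Suc (Lh h))"
    proof -
      have "h + m + l - 1 = Suc (Lh h)" unfolding Lh_def using h m l by simp
      thus ?thesis unfolding RR_inf_def Lh_def using limI[OF RR_lim[OF y h1 m l]] by simp
    qed
    have R1: "RR_inf (l + 1) (delay_embed m y) ((1/2) ^ h) = real (l+1) * Dd (Suc (Lh h)) - real l * Dd (Suc (Suc (Lh h)))"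
    proof -
      have a1: "h + m + (l+1) - 2 = Suc (Lh h)" unfolding Lh_def using h m l by simp
      have a2: "h + m + (l+1) - 1 = Suc (Suc (Lh h))" unfolding Lh_def using h m l by simp
      have "RR_inf (l + 1) (delay_embed m y) ((1/2) ^ h) = real (l+1) * Dd (h + m + (l+1) - 2) - (real (l+1) - 1) * Dd (h + m + (l+1) - 1)"
        unfolding RR_inf_def using limI[OF RR_lim[OF y h1 m, of "l+1"]] by simp
      thus ?thesis unfolding a1 a2 by simp
    qed
    have L1: "Lh h \<ge> 1" and LS: "Suc (Lh h) \<ge> 1" using L2 by auto
    have "\<bar>(real (l+1) * Dd (Suc (Lh h)) - real l * Dd (Suc (Suc (Lh h)))) / (real l * Dd (Lh h) - (real l - 1) * Dd (Suc (Lh h))) - 1\<bar>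
       \<le> real l * (C / (real (Lh h) - 1))"
    proof (rule ratio_bound[OF Dd_pos[OF y L1] _ E_mono[OF y L1] _ l])
      show "0 \<le> Dd (Suc (Lh h)) - Dd (Suc (Suc (Lh h)))" using Dd_anti[OF y LS] by simp
      show "Dd (Lh h) - Dd (Suc (Lh h)) \<le> C / (real (Lh h) - 1) * Dd (Lh h)"
        using EB[OF L2] by (simp add: field_simps)
    qed
    moreover have "real (Lh h) - 1 = real h + real m + real l - 3" unfolding Lh_def using h m l by (simp add: of_nat_diff)
    ultimately show ?thesis unfolding R0 R1 bnd_def by simp
  qed
  have lo: "\<forall>\<^sub>F h in sequentially. 1 - bnd h \<le> RR_inf (l + 1) (delay_embed m y) ((1/2) ^ h) / RR_inf l (delay_embed m y) ((1/2) ^ h)"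
  proof (rule eventually_sequentiallyI[of 2])
    fix h :: nat assume "h \<ge> 2"
    from key[OF this] show "1 - bnd h \<le> RR_inf (l + 1) (delay_embed m y) ((1/2) ^ h) / RR_inf l (delay_embed m y) ((1/2) ^ h)"
      by linarith
  qed
  have hi: "\<forall>\<^sub>F h in sequentially. RR_inf (l + 1) (delay_embed m y) ((1/2) ^ h) / RR_inf l (delay_embed m y) ((1/2) ^ h) \<le> 1 + bnd h"
  proof (rule eventually_sequentiallyI[of 2])
    fix h :: nat assume "h \<ge> 2"
    from key[OF this] show "RR_inf (l + 1) (delay_embed m y) ((1/2) ^ h) / RR_inf l (delay_embed m y) ((1/2) ^ h) \<le> 1 + bnd h"
      by linarith
  qed
  have l1: "(\<lambda>h. 1 - bnd h) \<longlonglongrightarrow> 1" using tendsto_diff[OF tendsto_const bl, of 1] by simp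
  have l2: "(\<lambda>h. 1 + bnd h) \<longlonglongrightarrow> 1" using tendsto_add[OF tendsto_const bl, of 1] by simp
  show ?thesis by (rule tendsto_sandwich[OF lo hi l1 l2])
qed


end
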